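(* Assume $X$ and $c\theta$ ($c>0$) are independent, non-negative, integer-valued random variables with $\mathbb{P}(c\theta\le m)=1$ for some $m\in\mathbb{N}$, and that the net profit condition $c\,\mathbb{E}\theta-\mathbb{E}X>0$ holds (with finite means). Then: (1) for all $s\in\mathbb{C}$ with $0<|s|\le 1$, $$\sum_{i=0}^{m-1}\pi_i\sum_{j=i+1}^{m}(1-s^{i-j})f(-j)=G_{\mathcal M}(s)\big(1-G_{X-c\theta}(s)\big);$$ (2) $$\sum_{i=0}^{m-1}\pi_i\sum_{j=i+1}^{m}(j-i)f(-j)=c\,\mathbb{E}\theta-\mathbb{E}X;$$ (3) for all $|s|<1$ with $s^m(1-G_{X-c\theta}(s))\neq 0$, $$\Xi(s)=\frac{1}{s^m\big(G_{X-c\theta}(s)-1\big)}\sum_{i=0}^{m-1}\pi_i\sum_{j=0}^{m-i-1}s^{j+i}F(-m+j).$$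
   Context: $X_1,X_2,\dots$ are i.i.d. copies of $X$, $\theta_1,\theta_2,\dots$ i.i.d. copies of $\theta$, all mutually independent. $\varphi(u)=\mathbb{P}\big(\sup_{n\ge1}\sum_{i=1}^n(X_i-c\theta_i)<u\big)$ for $u\in\mathbb{N}_0$. $\mathcal M=\big(\sup_{n\ge1}\sum_{i=1}^n(X_i-c\theta_i)\big)^+$ with $a^+=\max\{0,a\}$, and $\pi_i=\mathbb{P}(\mathcal M=i)$, $i\in\mathbb{N}_0$. For a non-negative integer-valued $Z$, $G_Z(s)=\mathbb{E}s^Z=\sum_k\mathbb{P}(Z=k)s^k$; $G_{X-c\theta}(s)=G_X(s)G_{c\theta}(1/s)$ for $0<|s|\le1$. $\Xi(s)=\sum_{i\ge0}\varphi(i+1)s^i$ for $|s|<1$. For $j\in\mathbb{Z}$: $f(j)=\mathbb{P}(X-c\theta=j)$, $F(j)=\mathbb{P}(X-c\theta\le j)$. *)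

theory Defs
  imports "HOL-Probability.Probability"
begin

text \<open>Random walk S_n = sum_{i<=n} (X_i - c theta_i) (indices shifted to start at 0).
  The supremum is taken in the extended reals.\<close>

definition walk_sup :: "(nat \<Rightarrow> 'a \<Rightarrow> real) \<Rightarrow> (nat \<Rightarrow> 'a \<Rightarrow> real) \<Rightarrow> real \<Rightarrow> 'a \<Rightarrow> ereal" where
  "walk_sup X \<theta> c \<omega> = (SUP n. ereal (\<Sum>i\<le>n. X i \<omega> - c * \<theta> i \<omega>))"

definition surv_phi :: "'a measure \<Rightarrow> (nat \<Rightarrow> 'a \<Rightarrow> real) \<Rightarrow> (nat \<Rightarrow> 'a \<Rightarrow> real) \<Rightarrow> real \<Rightarrow> nat \<Rightarrow> real" where
  "surv_phi M X \<theta> c u = measure M {\<omega> \<in> space M. walk_sup X \<theta> c \<omega> < ereal (real u)}"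

definition pi_M :: "'a measure \<Rightarrow> (nat \<Rightarrow> 'a \<Rightarrow> real) \<Rightarrow> (nat \<Rightarrow> 'a \<Rightarrow> real) \<Rightarrow> real \<Rightarrow> nat \<Rightarrow> real" where
  "pi_M M X \<theta> c i = measure M {\<omega> \<in> space M. max 0 (walk_sup X \<theta> c \<omega>) = ereal (real i)}"

definition pgf :: "'a measure \<Rightarrow> ('a \<Rightarrow> real) \<Rightarrow> complex \<Rightarrow> complex" where
  "pgf M Z s = (\<Sum>k. complex_of_real (measure M {\<omega> \<in> space M. Z \<omega> = real k}) * s ^ k)"

text \<open>G_{X - c theta}(s) = G_X(s) G_{c theta}(1/s)\<close>
definition pgf_diff :: "'a measure \<Rightarrow> ('a \<Rightarrow> real) \<Rightarrow> ('a \<Rightarrow> real) \<Rightarrow> complex \<Rightarrow> complex" where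
  "pgf_diff M Z W s = pgf M Z s * pgf M W (1 / s)"

definition pgf_M :: "'a measure \<Rightarrow> (nat \<Rightarrow> 'a \<Rightarrow> real) \<Rightarrow> (nat \<Rightarrow> 'a \<Rightarrow> real) \<Rightarrow> real \<Rightarrow> complex \<Rightarrow> complex" where
  "pgf_M M X \<theta> c s = (\<Sum>i. complex_of_real (pi_M M X \<theta> c i) * s ^ i)"

definition Xi :: "'a measure \<Rightarrow> (nat \<Rightarrow> 'a \<Rightarrow> real) \<Rightarrow> (nat \<Rightarrow> 'a \<Rightarrow> real) \<Rightarrow> real \<Rightarrow> complex \<Rightarrow> complex" where
  "Xi M X \<theta> c s = (\<Sum>i. complex_of_real (surv_phi M X \<theta> c (i + 1)) * s ^ i)"

definition f_pmf :: "'a measure \<Rightarrow> ('a \<Rightarrow> real) \<Rightarrow> ('a \<Rightarrow> real) \<Rightarrow> real \<Rightarrow> int \<Rightarrow> real" where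
  "f_pmf M X \<theta> c j = measure M {\<omega> \<in> space M. X \<omega> - c * \<theta> \<omega> = real_of_int j}"

definition F_cdf :: "'a measure \<Rightarrow> ('a \<Rightarrow> real) \<Rightarrow> ('a \<Rightarrow> real) \<Rightarrow> real \<Rightarrow> int \<Rightarrow> real" where
  "F_cdf M X \<theta> c j = measure M {\<omega> \<in> space M. X \<omega> - c * \<theta> \<omega> \<le> real_of_int j}"

end

theory Submission
  imports Defs
begin
locale TS = prob_space M for M :: "'a measure" +
  fixes X \<theta> :: "nat \<Rightarrow> 'a \<Rightarrow> real" and c :: real and m :: nat
  assumes cpos: "c > 0"
    and rvX[measurable]: "\<And>i. X i \<in> borel_measurable M"
    and rv\<theta>[measurable]: "\<And>i. \<theta> i \<in> borel_measurable M"
    and indep: "indep_vars (\<lambda>_. borel)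
                  (\<lambda>k. case k of Inl i \<Rightarrow> X i | Inr i \<Rightarrow> \<theta> i) (UNIV :: (nat + nat) set)"
    and idX: "\<And>i. distr M borel (X i) = distr M borel (X 0)"
    and id\<theta>: "\<And>i. distr M borel (\<theta> i) = distr M borel (\<theta> 0)"
    and natX: "\<And>i \<omega>. \<omega> \<in> space M \<Longrightarrow> X i \<omega> \<in> \<nat>"
    and nat\<theta>: "\<And>i \<omega>. \<omega> \<in> space M \<Longrightarrow> c * \<theta> i \<omega> \<in> \<nat>"
    and bound: "measure M {\<omega> \<in> space M. c * \<theta> 0 \<omega> \<le> real m} = 1"
    and intX: "integrable M (X 0)"
    and int\<theta>: "integrable M (\<theta> 0)"
    and npc: "c * integral\<^sup>L M (\<theta> 0) - integral\<^sup>L M (X 0) > 0"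
begin

definition V :: "nat + nat \<Rightarrow> 'a \<Rightarrow> real" where
  "V k = (case k of Inl i \<Rightarrow> X i | Inr i \<Rightarrow> \<theta> i)"

definition sh :: "nat + nat \<Rightarrow> nat + nat" where
  "sh k = (case k of Inl i \<Rightarrow> Inl (Suc i) | Inr i \<Rightarrow> Inr (Suc i))"

definition \<nu> :: "nat + nat \<Rightarrow> real measure" where
  "\<nu> k = (case k of Inl i \<Rightarrow> distr M borel (X 0) | Inr i \<Rightarrow> distr M borel (\<theta> 0))"

lemma V_meas[measurable]: "V k \<in> borel_measurable M"
  by (cases k) (auto simp: V_def)

lemma distr_V: "distr M borel (V k) = \<nu> k"
  using idX id\<theta> by (cases k) (auto simp: V_def \<nu>_def)

lemma \<nu>_sh: "\<nu> (sh k) = \<nu> k"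
  by (cases k) (auto simp: sh_def \<nu>_def)

lemma prob_\<nu>: "prob_space (\<nu> k)"
  using distr_V[of k] by (metis prob_space_distr V_meas)

lemma sets_\<nu>[measurable_cong]: "sets (\<nu> k) = sets borel"
  by (cases k) (auto simp: \<nu>_def)

lemma inj_sh: "inj sh"
  unfolding inj_def sh_def by (auto split: sum.splits)

abbreviation "PB \<equiv> PiM (UNIV :: (nat+nat) set) (\<lambda>_. borel :: real measure)"

lemma Vw_meas[measurable]: "(\<lambda>\<omega>. \<lambda>k. V k \<omega>) \<in> measurable M PB"
  by (rule measurable_PiM_single') (auto simp: space_PiM)

lemma law: "distr M PB (\<lambda>\<omega>. \<lambda>k. V k \<omega>) = PiM UNIV \<nu>"
proof -
  have "distr M PB (\<lambda>x. \<lambda>i\<in>UNIV. V i x) = PiM UNIV (\<lambda>i. distr M borel (V i))"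
    using indep_vars_iff_distr_eq_PiM[where I=UNIV and M'="\<lambda>_. borel" and X=V] indep V_meas
    by (simp add: V_def[abs_def])
  then show ?thesis by (simp add: distr_V restrict_UNIV)
qed

lemma law_sh: "distr M PB (\<lambda>\<omega>. \<lambda>k. V (sh k) \<omega>) = PiM UNIV \<nu>"
proof -
  have m: "(\<lambda>\<omega>. \<lambda>k. \<omega> (sh k)) \<in> measurable PB PB"
    by (rule measurable_PiM_single') (auto simp: space_PiM)
  have "distr M PB (\<lambda>\<omega>. \<lambda>k. V (sh k) \<omega>) = distr (distr M PB (\<lambda>\<omega>. \<lambda>k. V k \<omega>)) PB (\<lambda>\<omega>. \<lambda>k. \<omega> (sh k))"
    by (subst distr_distr) (auto simp: comp_def m)
  also have "\<dots> = distr (PiM UNIV \<nu>) (PiM UNIV (\<lambda>i. \<nu> (sh i))) (\<lambda>\<omega>. \<lambda>n\<in>UNIV. \<omega> (sh n))"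
    unfolding law by (intro distr_cong) (auto simp: restrict_UNIV sets_\<nu> intro!: sets_PiM_cong)
  also have "\<dots> = PiM UNIV (\<lambda>i. \<nu> (sh i))"
    by (rule distr_PiM_reindex) (auto simp: prob_\<nu> inj_sh)
  finally show ?thesis by (simp add: \<nu>_sh)
qed

lemma law_shift:
  assumes G: "G \<in> measurable PB N"
  shows "distr M N (\<lambda>\<omega>. G (\<lambda>k. V (sh k) \<omega>)) = distr M N (\<lambda>\<omega>. G (\<lambda>k. V k \<omega>))"
proof -
  have m: "(\<lambda>\<omega>. \<lambda>k. V (sh k) \<omega>) \<in> measurable M PB"
    by (rule measurable_PiM_single') (auto simp: space_PiM)
  have "distr M N (\<lambda>\<omega>. G (\<lambda>k. V (sh k) \<omega>)) = distr (distr M PB (\<lambda>\<omega>. \<lambda>k. V (sh k) \<omega>)) N G"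
    by (subst distr_distr) (auto simp: comp_def m G)
  also have "\<dots> = distr (distr M PB (\<lambda>\<omega>. \<lambda>k. V k \<omega>)) N G"
    unfolding law_sh law ..
  also have "\<dots> = distr M N (\<lambda>\<omega>. G (\<lambda>k. V k \<omega>))"
    by (subst distr_distr) (auto simp: comp_def G)
  finally show ?thesis .
qed

end

fun Mx :: "(nat \<Rightarrow> real) \<Rightarrow> nat \<Rightarrow> real" where
  "Mx y 0 = y 0"
| "Mx y (Suc n) = y 0 + max 0 (Mx (\<lambda>i. y (Suc i)) n)"

lemma Mx_le_iff: "Mx y n \<le> t \<longleftrightarrow> (\<forall>k\<le>n. (\<Sum>i\<le>k. y i) \<le> t)"
proof (induction n arbitrary: y t)
  case 0 then show ?case by simp
next
  case (Suc n)
  have "Mx y (Suc n) \<le> t \<longleftrightarrow> y 0 \<le> t \<and> Mx (\<lambda>i. y (Suc i)) n \<le> t - y 0"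
    by auto
  also have "\<dots> \<longleftrightarrow> y 0 \<le> t \<and> (\<forall>k\<le>n. (\<Sum>i\<le>k. y (Suc i)) \<le> t - y 0)"
    using Suc by simp
  also have "\<dots> \<longleftrightarrow> (\<forall>k\<le>Suc n. (\<Sum>i\<le>k. y i) \<le> t)"
  proof safe
    fix k assume a: "y 0 \<le> t" "\<forall>k\<le>n. (\<Sum>i\<le>k. y (Suc i)) \<le> t - y 0" "k \<le> Suc n"
    show "(\<Sum>i\<le>k. y i) \<le> t"
    proof (cases k)
      case 0 then show ?thesis using a by simp
    next
      case (Suc k') then show ?thesis using a(2)[rule_format, of k'] a(3)
        by (simp add: sum.atMost_Suc_shift del: sum.atMost_Suc)
    qed
  next
    assume "\<forall>k\<le>Suc n. (\<Sum>i\<le>k. y i) \<le> t"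
    then show "y 0 \<le> t" by (metis atMost_0 empty_iff finite.emptyI sum.insert zero_le sum.empty add.right_neutral insert_iff)
  next
    fix k assume a: "\<forall>k\<le>Suc n. (\<Sum>i\<le>k. y i) \<le> t" "k \<le> n"
    then have "(\<Sum>i\<le>Suc k. y i) \<le> t" by (simp del: sum.atMost_Suc)
    then show "(\<Sum>i\<le>k. y (Suc i)) \<le> t - y 0"
      by (simp add: sum.atMost_Suc_shift del: sum.atMost_Suc)
  qed
  finally show ?case .
qed

lemma Mx_mono: "Mx y n \<le> Mx y (Suc n)"
  using Mx_le_iff[of y "Suc n" "Mx y (Suc n)"] Mx_le_iff[of y n "Mx y (Suc n)"] by auto

lemma Mx_meas[measurable]: "(\<lambda>y. Mx y n) \<in> borel_measurable (PiM (UNIV::nat set) (\<lambda>_. borel))"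
proof (induction n)
  case 0 then show ?case by simp
next
  case (Suc n)
  have sh: "(\<lambda>y::nat\<Rightarrow>real. \<lambda>i. y (Suc i)) \<in> measurable (PiM (UNIV::nat set) (\<lambda>_. borel)) (PiM (UNIV::nat set) (\<lambda>_. borel))"
    by (rule measurable_PiM_single') (auto simp: space_PiM)
  have "(\<lambda>y. Mx (\<lambda>i. y (Suc i)) n) \<in> borel_measurable (PiM (UNIV::nat set) (\<lambda>_. borel))"
    using measurable_comp[OF sh Suc] by (simp add: comp_def)
  then show ?case by simp
qed

definition Wf :: "(nat \<Rightarrow> real) \<Rightarrow> ereal" where
  "Wf y = (SUP n. ereal (\<Sum>i\<le>n. y i))"

lemma Wf_meas[measurable]: "Wf \<in> borel_measurable (PiM (UNIV::nat set) (\<lambda>_. borel))"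
  unfolding Wf_def by measurable

lemma Wf_le_iff: "Wf y \<le> ereal t \<longleftrightarrow> (\<forall>n. Mx y n \<le> t)"
  unfolding Wf_def SUP_le_iff using Mx_le_iff by auto

lemma Wf_shift: "Wf y = ereal (y 0) + max 0 (Wf (\<lambda>i. y (Suc i)))"
proof -
  have s: "(\<Sum>i\<le>Suc n. y i) = y 0 + (\<Sum>i\<le>n. y (Suc i))" for n
    by (simp add: sum.atMost_Suc_shift del: sum.atMost_Suc)
  have "Wf y = max (ereal (y 0)) (SUP n. ereal (\<Sum>i\<le>Suc n. y i))"
    unfolding Wf_def
  proof (rule antisym)
    show "(SUP n. ereal (\<Sum>i\<le>n. y i)) \<le> max (ereal (y 0)) (SUP n. ereal (\<Sum>i\<le>Suc n. y i))"
    proof (rule SUP_least)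
      fix n show "ereal (\<Sum>i\<le>n. y i) \<le> max (ereal (y 0)) (SUP n. ereal (\<Sum>i\<le>Suc n. y i))"
      proof (cases n)
        case (Suc k) then show ?thesis
          by (intro max.coboundedI2) (rule SUP_upper2[of k], auto simp del: sum.atMost_Suc)
      qed simp
    qed
  next
    show "max (ereal (y 0)) (SUP n. ereal (\<Sum>i\<le>Suc n. y i)) \<le> (SUP n. ereal (\<Sum>i\<le>n. y i))"
    proof (rule max.boundedI)
      show "ereal (y 0) \<le> (SUP n. ereal (\<Sum>i\<le>n. y i))"
        by (rule SUP_upper2[of 0]) auto
      show "(SUP n. ereal (\<Sum>i\<le>Suc n. y i)) \<le> (SUP n. ereal (\<Sum>i\<le>n. y i))"
        by (rule SUP_least, rule SUP_upper2) (auto simp del: sum.atMost_Suc)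
    qed
  qed
  also have "(SUP n. ereal (\<Sum>i\<le>Suc n. y i)) = ereal (y 0) + Wf (\<lambda>i. y (Suc i))"
    unfolding Wf_def s plus_ereal.simps(1)[symmetric]
    by (subst SUP_ereal_add_right) auto
  also have "max (ereal (y 0)) (ereal (y 0) + Wf (\<lambda>i. y (Suc i))) = ereal (y 0) + max 0 (Wf (\<lambda>i. y (Suc i)))"
    by (cases "Wf (\<lambda>i. y (Suc i))") (auto simp: max_def)
  finally show ?thesis .
qed

context TS begin

definition Yv :: "nat \<Rightarrow> 'a \<Rightarrow> real" where
  "Yv i \<omega> = X i \<omega> - c * \<theta> i \<omega>"

lemma Yv_meas[measurable]: "Yv i \<in> borel_measurable M"
  unfolding Yv_def by measurable

definition toY :: "(nat + nat \<Rightarrow> real) \<Rightarrow> nat \<Rightarrow> real" where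
  "toY \<omega> = (\<lambda>i. \<omega> (Inl i) - c * \<omega> (Inr i))"

lemma toY_meas[measurable]: "toY \<in> measurable PB (PiM (UNIV::nat set) (\<lambda>_. borel))"
  unfolding toY_def by (rule measurable_PiM_single') (auto simp: space_PiM)

lemma toY_V: "toY (\<lambda>k. V k \<omega>) = (\<lambda>i. Yv i \<omega>)"
  by (simp add: toY_def V_def Yv_def)

lemma toY_Vsh: "toY (\<lambda>k. V (sh k) \<omega>) = (\<lambda>i. Yv (Suc i) \<omega>)"
  by (simp add: toY_def V_def Yv_def sh_def)

lemma law_shiftY:
  assumes G: "G \<in> measurable (PiM (UNIV::nat set) (\<lambda>_. borel)) N"
  shows "distr M N (\<lambda>\<omega>. G (\<lambda>i. Yv (Suc i) \<omega>)) = distr M N (\<lambda>\<omega>. G (\<lambda>i. Yv i \<omega>))"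
  using law_shift[of "\<lambda>\<omega>. G (toY \<omega>)" N] G by (simp add: toY_V toY_Vsh)

lemma X_nonneg: "\<omega> \<in> space M \<Longrightarrow> 0 \<le> X i \<omega>"
  using natX[of \<omega> i] by (auto elim!: Nats_cases)

lemma c\<theta>_nonneg: "\<omega> \<in> space M \<Longrightarrow> 0 \<le> c * \<theta> i \<omega>"
  using nat\<theta>[of \<omega> i] by (auto elim!: Nats_cases)

lemma Yv_le_X: "\<omega> \<in> space M \<Longrightarrow> Yv i \<omega> \<le> X i \<omega>"
  using c\<theta>_nonneg[of \<omega> i] by (simp add: Yv_def)

lemma prob_bound_i: "prob {\<omega> \<in> space M. c * \<theta> i \<omega> \<le> real m} = 1"
proof -
  have s: "{t::real. c * t \<le> real m} \<in> sets borel" by measurable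
  have "prob {\<omega> \<in> space M. c * \<theta> i \<omega> \<le> real m} = measure (distr M borel (\<theta> i)) {t. c * t \<le> real m}"
    by (subst measure_distr) (auto intro!: arg_cong[where f=prob] simp: s)
  also have "\<dots> = measure (distr M borel (\<theta> 0)) {t. c * t \<le> real m}" by (simp add: id\<theta>[of i])
  also have "\<dots> = prob {\<omega> \<in> space M. c * \<theta> 0 \<omega> \<le> real m}"
    by (subst measure_distr) (auto intro!: arg_cong[where f=prob] simp: s)
  finally show ?thesis using bound by simp
qed

lemma AE_bound: "AE \<omega> in M. \<forall>i. c * \<theta> i \<omega> \<le> real m"
proof -
  have "AE \<omega> in M. c * \<theta> i \<omega> \<le> real m" for i
    using AE_prob_1[OF prob_bound_i[of i]] by auto
  then show ?thesis by (simp add: AE_all_countable)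
qed

lemma AE_Y_ge: "AE \<omega> in M. \<forall>i. - real m \<le> Yv i \<omega>"
  using AE_bound
proof (rule AE_mp, intro AE_I2 impI allI)
  fix \<omega> i assume "\<omega> \<in> space M" "\<forall>i. c * \<theta> i \<omega> \<le> real m"
  then show "- real m \<le> Yv i \<omega>" using X_nonneg[of \<omega> i] by (auto simp: Yv_def dest: spec[of _ i])
qed

end

context TS begin

definition A :: "nat \<Rightarrow> 'a \<Rightarrow> real" where "A n \<omega> = max 0 (Mx (\<lambda>i. Yv i \<omega>) n)"
definition B :: "nat \<Rightarrow> 'a \<Rightarrow> real" where "B n \<omega> = max 0 (Mx (\<lambda>i. Yv (Suc i) \<omega>) n)"

lemma Yw_meas[measurable]: "(\<lambda>\<omega>. \<lambda>i. Yv i \<omega>) \<in> measurable M (PiM (UNIV::nat set) (\<lambda>_. borel))"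
  by (rule measurable_PiM_single') (auto simp: space_PiM)
lemma Yw_sh_meas[measurable]: "(\<lambda>\<omega>. \<lambda>i. Yv (Suc i) \<omega>) \<in> measurable M (PiM (UNIV::nat set) (\<lambda>_. borel))"
  by (rule measurable_PiM_single') (auto simp: space_PiM)

lemma A_meas[measurable]: "A n \<in> borel_measurable M"
proof -
  have "(\<lambda>\<omega>. Mx (\<lambda>i. Yv i \<omega>) n) \<in> borel_measurable M"
    using measurable_comp[OF Yw_meas Mx_meas[of n]] by (simp add: comp_def)
  then show ?thesis unfolding A_def by measurable
qed

lemma B_meas[measurable]: "B n \<in> borel_measurable M"
proof -
  have "(\<lambda>\<omega>. Mx (\<lambda>i. Yv (Suc i) \<omega>) n) \<in> borel_measurable M"
    using measurable_comp[OF Yw_sh_meas Mx_meas[of n]] by (simp add: comp_def)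
  then show ?thesis unfolding B_def by measurable
qed

lemma A_Suc: "A (Suc n) \<omega> = max 0 (Yv 0 \<omega> + B n \<omega>)"
  by (simp add: A_def B_def)

lemma A_mono: "A n \<omega> \<le> A (Suc n) \<omega>"
  unfolding A_def using Mx_mono by (intro max.mono) auto

lemma distr_AB: "distr M borel (B n) = distr M borel (A n)"
proof -
  have G: "(\<lambda>y. max 0 (Mx y n)) \<in> borel_measurable (PiM (UNIV::nat set) (\<lambda>_. borel))"
    by measurable
  show ?thesis using law_shiftY[OF G] by (simp add: A_def[abs_def] B_def[abs_def])
qed

lemma int_Xi: "integrable M (X i)"
proof -
  have "integrable (distr M borel (X i)) (\<lambda>x. x) = integrable (distr M borel (X 0)) (\<lambda>x. x)"
    by (simp add: idX[of i])
  then show ?thesis using intX by (simp add: integrable_distr_eq)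
qed

lemma int_A: "integrable M (A n)"
proof (rule Bochner_Integration.integrable_bound[where f="\<lambda>\<omega>. \<Sum>i\<le>n. X i \<omega>"])
  show "integrable M (\<lambda>\<omega>. \<Sum>i\<le>n. X i \<omega>)" by (auto intro: int_Xi)
  show "AE x in M. norm (A n x) \<le> norm (\<Sum>i\<le>n. X i x)"
  proof (rule AE_I2)
    fix \<omega> assume w: "\<omega> \<in> space M"
    have s0: "0 \<le> (\<Sum>i\<le>n. X i \<omega>)" using X_nonneg[OF w] by (auto intro: sum_nonneg)
    have "Mx (\<lambda>i. Yv i \<omega>) n \<le> (\<Sum>i\<le>n. X i \<omega>)"
      unfolding Mx_le_iff
    proof safe
      fix k assume "k \<le> n"
      have "(\<Sum>i\<le>k. Yv i \<omega>) \<le> (\<Sum>i\<le>k. X i \<omega>)" using Yv_le_X[OF w] by (auto intro: sum_mono)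
      also have "\<dots> \<le> (\<Sum>i\<le>n. X i \<omega>)" using \<open>k \<le> n\<close> X_nonneg[OF w]
        by (intro sum_mono2) auto
      finally show "(\<Sum>i\<le>k. Yv i \<omega>) \<le> (\<Sum>i\<le>n. X i \<omega>)" .
    qed
    then show "norm (A n \<omega>) \<le> norm (\<Sum>i\<le>n. X i \<omega>)" using s0 by (simp add: A_def)
  qed
qed simp

lemma int_B: "integrable M (B n)"
proof -
  have "integrable (distr M borel (B n)) (\<lambda>x. x) = integrable (distr M borel (A n)) (\<lambda>x. x)"
    by (simp add: distr_AB)
  then show ?thesis using int_A by (simp add: integrable_distr_eq)
qed

lemma integral_B: "integral\<^sup>L M (B n) = integral\<^sup>L M (A n)"
proof -
  have "integral\<^sup>L (distr M borel (B n)) (\<lambda>x. x) = integral\<^sup>L (distr M borel (A n)) (\<lambda>x. x)"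
    by (simp add: distr_AB)
  then show ?thesis by (simp add: integral_distr)
qed

lemma prob_B: "prob {\<omega>\<in>space M. B n \<omega> \<le> real m} = prob {\<omega>\<in>space M. A n \<omega> \<le> real m}"
proof -
  have s: "{t::real. t \<le> real m} \<in> sets borel" by measurable
  have "measure (distr M borel (B n)) {t. t \<le> real m} = measure (distr M borel (A n)) {t. t \<le> real m}"
    by (simp add: distr_AB)
  then show ?thesis
    by (simp add: measure_distr s vimage_def Int_def conj_commute)
qed

lemma int_Y0: "integral\<^sup>L M (Yv 0) = integral\<^sup>L M (X 0) - c * integral\<^sup>L M (\<theta> 0)"
  unfolding Yv_def[abs_def] using intX int\<theta> by simp

lemma drift_bound: "c * integral\<^sup>L M (\<theta> 0) - integral\<^sup>L M (X 0) \<le> real m * prob {\<omega>\<in>space M. A n \<omega> \<le> real m}"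
proof -
  let ?I = "indicator {\<omega>\<in>space M. B n \<omega> \<le> real m} :: 'a \<Rightarrow> real"
  have intY: "integrable M (Yv 0)" unfolding Yv_def[abs_def] using intX int\<theta> by simp
  have intI: "integrable M ?I" by (rule integrable_real_indicator) (auto simp: emeasure_eq_measure)
  have int_AS: "integrable M (A (Suc n))" by (rule int_A)
  have "integral\<^sup>L M (A n) \<le> integral\<^sup>L M (A (Suc n))"
    by (intro integral_mono int_A A_mono)
  also have "\<dots> \<le> integral\<^sup>L M (\<lambda>\<omega>. Yv 0 \<omega> + B n \<omega> + real m * ?I \<omega>)"
  proof (rule integral_mono_AE)
    show "integrable M (\<lambda>\<omega>. Yv 0 \<omega> + B n \<omega> + real m * ?I \<omega>)"
      using intY int_B intI by auto
    show "AE \<omega> in M. A (Suc n) \<omega> \<le> Yv 0 \<omega> + B n \<omega> + real m * ?I \<omega>"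
      using AE_Y_ge
    proof (rule AE_mp, intro AE_I2 impI)
      fix \<omega> assume w: "\<omega> \<in> space M" and y: "\<forall>i. - real m \<le> Yv i \<omega>"
      have b0: "0 \<le> B n \<omega>" by (simp add: B_def)
      show "A (Suc n) \<omega> \<le> Yv 0 \<omega> + B n \<omega> + real m * ?I \<omega>"
        using y[rule_format, of 0] b0 w by (auto simp: A_Suc indicator_def)
    qed
  qed (rule int_AS)
  also have "\<dots> = integral\<^sup>L M (Yv 0) + integral\<^sup>L M (A n) + real m * prob {\<omega>\<in>space M. A n \<omega> \<le> real m}"
    using intY int_B intI by (simp add: integral_B prob_B)
  finally show ?thesis by (simp add: int_Y0)
qed

end

lemma Wf_fin_shift: "Wf y < \<infinity> \<longleftrightarrow> Wf (\<lambda>i. y (Suc i)) < \<infinity>"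
  by (subst Wf_shift) (cases "Wf (\<lambda>i. y (Suc i))"; auto simp: max_def)

lemma Wf_fin_shiftn: "Wf y < \<infinity> \<longleftrightarrow> Wf (\<lambda>i. y (n + i)) < \<infinity>"
proof (induction n)
  case 0 then show ?case by simp
next
  case (Suc n) then show ?case using Wf_fin_shift[of "\<lambda>i. y (n + i)"] by simp
qed

context TS begin

definition W :: "'a \<Rightarrow> ereal" where "W \<omega> = Wf (\<lambda>i. Yv i \<omega>)"
definition W' :: "'a \<Rightarrow> ereal" where "W' \<omega> = Wf (\<lambda>i. Yv (Suc i) \<omega>)"

lemma W_walk: "walk_sup X \<theta> c = W"
  by (simp add: fun_eq_iff walk_sup_def W_def Wf_def Yv_def)

lemma W_meas[measurable]: "W \<in> borel_measurable M"
  using measurable_comp[OF Yw_meas Wf_meas] by (simp add: comp_def W_def[abs_def])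
lemma W'_meas[measurable]: "W' \<in> borel_measurable M"
  using measurable_comp[OF Yw_sh_meas Wf_meas] by (simp add: comp_def W'_def[abs_def])

lemma W_shift: "W \<omega> = ereal (Yv 0 \<omega>) + max 0 (W' \<omega>)"
  unfolding W_def W'_def by (rule Wf_shift)

lemma distr_W': "distr M borel W' = distr M borel W"
  using law_shiftY[OF Wf_meas] by (simp add: W_def[abs_def] W'_def[abs_def])

lemma d_pos: "0 < c * integral\<^sup>L M (\<theta> 0) - integral\<^sup>L M (X 0)" by (rule npc)

lemma m_pos: "0 < m"
proof (rule ccontr)
  assume "\<not> 0 < m" then have m0: "m = 0" by simp
  have "AE \<omega> in M. c * \<theta> 0 \<omega> = 0"
    using AE_bound
  proof (rule AE_mp, intro AE_I2 impI)
    fix \<omega> assume "\<omega> \<in> space M" "\<forall>i. c * \<theta> i \<omega> \<le> real m"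
    then show "c * \<theta> 0 \<omega> = 0" using c\<theta>_nonneg[of \<omega> 0] m0 by (auto dest: spec[of _ 0])
  qed
  then have "integral\<^sup>L M (\<lambda>\<omega>. c * \<theta> 0 \<omega>) = 0" by (rule integral_eq_zero_AE)
  moreover have "integral\<^sup>L M (\<lambda>\<omega>. c * \<theta> 0 \<omega>) = c * integral\<^sup>L M (\<theta> 0)" by (rule integral_mult_right_zero)
  ultimately have "c * integral\<^sup>L M (\<theta> 0) = 0" by simp
  moreover have "0 \<le> integral\<^sup>L M (X 0)" by (rule integral_nonneg_AE) (auto intro!: AE_I2 X_nonneg)
  ultimately show False using npc by (cases "c = 0") auto
qed

lemma W_le_m: "(c * integral\<^sup>L M (\<theta> 0) - integral\<^sup>L M (X 0)) / real m \<le> prob {\<omega>\<in>space M. W \<omega> \<le> ereal (real m)}"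
proof -
  have eq: "{\<omega>\<in>space M. W \<omega> \<le> ereal (real m)} = (\<Inter>n. {\<omega>\<in>space M. A n \<omega> \<le> real m})"
    by (auto simp: W_def Wf_le_iff A_def)
  have dec: "decseq (\<lambda>n. {\<omega>\<in>space M. A n \<omega> \<le> real m})"
    by (rule decseq_SucI) (auto intro: order_trans[OF A_mono])
  have lim: "(\<lambda>n. prob {\<omega>\<in>space M. A n \<omega> \<le> real m}) \<longlonglongrightarrow> prob (\<Inter>n. {\<omega>\<in>space M. A n \<omega> \<le> real m})"
    by (rule finite_Lim_measure_decseq) (auto simp: dec)
  have "(c * integral\<^sup>L M (\<theta> 0) - integral\<^sup>L M (X 0)) / real m \<le> prob {\<omega>\<in>space M. A n \<omega> \<le> real m}" for n
    using drift_bound[of n] m_pos by (simp add: divide_le_eq mult.commute)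
  then show ?thesis unfolding eq by (intro LIMSEQ_le_const[OF lim]) auto
qed

definition K :: "nat \<Rightarrow> (nat + nat) set" where "K i = {Inl i, Inr i}"
definition Z :: "nat \<Rightarrow> 'a \<Rightarrow> (nat + nat \<Rightarrow> real)" where "Z i \<omega> = restrict (\<lambda>k. V k \<omega>) (K i)"
definition Ai :: "nat \<Rightarrow> 'a set set" where
  "Ai i = sigma_sets (space M) {Z i -` B \<inter> space M | B. B \<in> sets (PiM (K i) (\<lambda>_. borel :: real measure))}"

lemma indep_Z: "indep_vars (\<lambda>i. PiM (K i) (\<lambda>_. borel :: real measure)) Z UNIV"
proof -
  have "indep_vars (\<lambda>_. borel :: real measure) V UNIV"
    using indep by (simp add: V_def[abs_def])
  from indep_vars_restrict[OF this, of UNIV K] show ?thesis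
    by (auto simp: Z_def[abs_def] disjoint_family_on_def K_def)
qed

lemma indep_Ai: "indep_sets Ai UNIV"
  using indep_Z unfolding indep_vars_def Ai_def by simp

lemma sigma_Ai: "sigma_algebra (space M) (Ai i)"
  unfolding Ai_def by (rule sigma_algebra_sigma_sets) auto

lemma tail_W_n: "{\<omega>\<in>space M. W \<omega> < \<infinity>} \<in> sigma_sets (space M) (\<Union> (Ai ` {n..}))"
proof -
  let ?S = "sigma_sets (space M) (\<Union> (Ai ` {n..}))"
  have AiS: "Ai i \<subseteq> Pow (space M)" for i
    unfolding Ai_def by (auto dest: sigma_sets_into_sp[rotated])
  have Ssub: "?S \<subseteq> Pow (space M)"
    using sigma_sets_into_sp[of "\<Union>(Ai`{n..})" "space M"] AiS by blast
  define N where "N = sigma (space M) ?S"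
  have spN: "space N = space M" using Ssub by (simp add: N_def)
  have sN: "sets N = ?S" using Ssub AiS
    by (simp add: N_def sets_measure_of) (rule sigma_sets_sigma_sets_eq, blast)
  have Vm: "V k \<in> borel_measurable N" if k: "k \<in> K j" "n \<le> j" for k j
  proof (rule measurableI)
    fix B :: "real set" assume B: "B \<in> sets borel"
    have "V k -` B \<inter> space N = Z j -` {f \<in> space (PiM (K j) (\<lambda>_. borel)). f k \<in> B} \<inter> space M"
      using k by (auto simp: spN Z_def space_PiM)
    moreover have "{f \<in> space (PiM (K j) (\<lambda>_. borel :: real measure)). f k \<in> B} \<in> sets (PiM (K j) (\<lambda>_. borel))"
      using k B by (intro sets_Collect_single) auto
    ultimately have "V k -` B \<inter> space N \<in> Ai j"
      unfolding Ai_def by (intro sigma_sets.Basic) blast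
    then show "V k -` B \<inter> space N \<in> sets N"
      using k unfolding sN by (auto intro: sigma_sets.Basic)
  qed simp
  have Ym: "Yv i \<in> borel_measurable N" if "n \<le> i" for i
  proof -
    have "X i \<in> borel_measurable N" using Vm[of "Inl i" i] that by (simp add: K_def V_def)
    moreover have "\<theta> i \<in> borel_measurable N" using Vm[of "Inr i" i] that by (simp add: K_def V_def)
    ultimately show ?thesis unfolding Yv_def[abs_def] by measurable
  qed
  have "(\<lambda>\<omega>. \<lambda>i. Yv (n + i) \<omega>) \<in> measurable N (PiM (UNIV::nat set) (\<lambda>_. borel))"
    by (rule measurable_PiM_single') (auto simp: space_PiM intro: Ym)
  then have "(\<lambda>\<omega>. Wf (\<lambda>i. Yv (n + i) \<omega>)) \<in> borel_measurable N"
    using measurable_comp[OF _ Wf_meas] by (simp add: comp_def)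
  then have "{\<omega>\<in>space N. Wf (\<lambda>i. Yv (n + i) \<omega>) < \<infinity>} \<in> sets N" by measurable
  moreover have "{\<omega>\<in>space M. W \<omega> < \<infinity>} = {\<omega>\<in>space N. Wf (\<lambda>i. Yv (n + i) \<omega>) < \<infinity>}"
    unfolding spN W_def using Wf_fin_shiftn[of "\<lambda>i. Yv i _" n] by auto
  ultimately show "{\<omega>\<in>space M. W \<omega> < \<infinity>} \<in> ?S" by (simp add: sN)
qed

lemma tail_W: "{\<omega>\<in>space M. W \<omega> < \<infinity>} \<in> tail_events Ai"
  unfolding tail_events_def using tail_W_n by blast

lemma prob_W_fin: "prob {\<omega>\<in>space M. W \<omega> < \<infinity>} = 1"
proof -
  have "prob {\<omega>\<in>space M. W \<omega> < \<infinity>} = 0 \<or> prob {\<omega>\<in>space M. W \<omega> < \<infinity>} = 1"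
    by (rule kolmogorov_0_1_law[OF sigma_Ai indep_Ai tail_W])
  moreover have "prob {\<omega>\<in>space M. W \<omega> \<le> ereal (real m)} \<le> prob {\<omega>\<in>space M. W \<omega> < \<infinity>}"
    by (intro finite_measure_mono) auto
  moreover have "0 < prob {\<omega>\<in>space M. W \<omega> \<le> ereal (real m)}"
    using W_le_m d_pos m_pos by (smt (verit) divide_pos_pos of_nat_0_less_iff)
  ultimately show ?thesis by auto
qed

lemma AE_W_fin: "AE \<omega> in M. W \<omega> < \<infinity>"
  using prob_W_fin by (subst (asm) prob_eq_1) auto

end

lemma (in prob_space) pgf_sums:
  fixes Z :: "'a \<Rightarrow> nat" and s :: complex
  assumes Z[measurable]: "Z \<in> measurable M (count_space UNIV)"
    and sm: "summable (\<lambda>i. prob {\<omega>\<in>space M. Z \<omega> = i} * norm s ^ i)"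
  shows "(\<lambda>k. complex_of_real (prob {\<omega>\<in>space M. Z \<omega> = k}) * s ^ k) sums (\<integral>\<omega>. s ^ Z \<omega> \<partial>M)"
proof -
  define f where "f k \<omega> = complex_of_real (indicator {\<omega>\<in>space M. Z \<omega> = k} \<omega>) * s ^ k" for k \<omega>
  have fm[measurable]: "f k \<in> borel_measurable M" for k unfolding f_def by measurable
  have fi: "integrable M (f k)" for k
  proof (rule Bochner_Integration.integrable_bound[where f="\<lambda>_. s ^ k"])
    show "AE x in M. norm (f k x) \<le> norm (s ^ k)"
      by (auto simp: f_def indicator_def norm_mult)
  qed auto
  have fint: "integral\<^sup>L M (f k) = complex_of_real (prob {\<omega>\<in>space M. Z \<omega> = k}) * s ^ k" for k
    unfolding f_def by simp
  have fnorm: "(\<integral>x. norm (f i x) \<partial>M) = prob {\<omega>\<in>space M. Z \<omega> = i} * norm s ^ i" for i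
  proof -
    have "(\<lambda>x. norm (f i x)) = (\<lambda>x. indicator {\<omega>\<in>space M. Z \<omega> = i} x * norm s ^ i)"
      by (auto simp: f_def fun_eq_iff indicator_def norm_mult norm_power)
    then show ?thesis by simp
  qed
  have fsum: "(\<Sum>i. f i x) = s ^ Z x" if x: "x \<in> space M" for x
  proof -
    have "f i x = (if i = Z x then s ^ i else 0)" for i using x by (auto simp: f_def)
    then show ?thesis using sums_single[of "Z x" "\<lambda>i. s ^ i"] by (simp add: sums_iff)
  qed
  have "(\<lambda>i. integral\<^sup>L M (f i)) sums (\<integral>x. (\<Sum>i. f i x) \<partial>M)"
  proof (rule sums_integral[OF fi])
    show "AE x in M. summable (\<lambda>i. norm (f i x))"
    proof (rule AE_I2, rule summable_finite[of "{Z x}" for x])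
      fix x n assume "x \<in> space M" "n \<notin> {Z x}" then show "norm (f n x) = 0" by (auto simp: f_def)
    qed simp
    show "summable (\<lambda>i. \<integral>x. norm (f i x) \<partial>M)" using sm by (simp add: fnorm)
  qed
  also have "(\<integral>x. (\<Sum>i. f i x) \<partial>M) = (\<integral>\<omega>. s ^ Z \<omega> \<partial>M)"
    by (rule Bochner_Integration.integral_cong) (auto simp: fsum)
  finally show ?thesis by (simp add: fint)
qed

lemma (in prob_space) summable_prob_nat:
  fixes Z :: "'a \<Rightarrow> nat"
  assumes Z[measurable]: "Z \<in> measurable M (count_space UNIV)"
  shows "summable (\<lambda>i. prob {\<omega>\<in>space M. Z \<omega> = i})"
proof -
  have "(\<lambda>n. \<P>(x in M. Z x = n)) sums \<P>(x in M. True)"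
    by (rule prob_sums) auto
  then show ?thesis by (auto simp: sums_iff)
qed

lemma (in prob_space) pgf_sums_le1:
  fixes Z :: "'a \<Rightarrow> nat" and s :: complex
  assumes Z[measurable]: "Z \<in> measurable M (count_space UNIV)" and s: "norm s \<le> 1"
  shows "(\<lambda>k. complex_of_real (prob {\<omega>\<in>space M. Z \<omega> = k}) * s ^ k) sums (\<integral>\<omega>. s ^ Z \<omega> \<partial>M)"
proof (rule pgf_sums[OF Z])
  show "summable (\<lambda>i. prob {\<omega>\<in>space M. Z \<omega> = i} * norm s ^ i)"
  proof (rule summable_comparison_test'[OF summable_prob_nat[OF Z]])
    fix n
    have "norm s ^ n \<le> 1" using s by (simp add: power_le_one)
    then show "norm (prob {\<omega>\<in>space M. Z \<omega> = n} * norm s ^ n) \<le> prob {\<omega>\<in>space M. Z \<omega> = n}"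
      by (simp add: abs_mult mult_left_le)
  qed
qed

lemma (in prob_space) pgf_sums_bounded:
  fixes Z :: "'a \<Rightarrow> nat" and s :: complex
  assumes Z[measurable]: "Z \<in> measurable M (count_space UNIV)" and b: "AE \<omega> in M. Z \<omega> \<le> b"
  shows "(\<lambda>k. complex_of_real (prob {\<omega>\<in>space M. Z \<omega> = k}) * s ^ k) sums (\<integral>\<omega>. s ^ Z \<omega> \<partial>M)"
proof (rule pgf_sums[OF Z])
  have z: "prob {\<omega>\<in>space M. Z \<omega> = i} = 0" if "i \<notin> {..b}" for i
  proof -
    have "AE \<omega> in M. \<omega> \<notin> {\<omega>\<in>space M. Z \<omega> = i}" using b by (rule AE_mp) (use that in auto)
    then show ?thesis by (subst prob_eq_0) auto
  qed
  show "summable (\<lambda>i. prob {\<omega>\<in>space M. Z \<omega> = i} * norm s ^ i)"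
    by (rule summable_finite[of "{..b}"]) (auto simp: z)
qed

definition hN :: "ereal \<Rightarrow> nat" where "hN e = nat \<lfloor>real_of_ereal e\<rfloor>"

lemma hN_meas[measurable]: "hN \<in> measurable borel (count_space UNIV)"
  unfolding hN_def by measurable

lemma Wf_int:
  assumes y: "\<And>i. y i \<in> \<int>" and fin: "Wf y < \<infinity>"
  shows "max 0 (Wf y) = ereal (real (hN (Wf y)))"
proof -
  have "ereal (y 0) \<le> Wf y" unfolding Wf_def by (rule SUP_upper2[of 0]) auto
  then obtain r where r: "Wf y = ereal r" using fin by (cases "Wf y") auto
  have "ereal (\<Sum>i\<le>n. y i) \<le> ereal (real_of_int \<lfloor>r\<rfloor>)" for n
  proof -
    have "(\<Sum>i\<le>n. y i) \<in> \<int>" using y by (intro Ints_sum) auto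
    then obtain z where z: "(\<Sum>i\<le>n. y i) = of_int z" by (auto elim: Ints_cases)
    have "ereal (\<Sum>i\<le>n. y i) \<le> Wf y" unfolding Wf_def by (rule SUP_upper) auto
    then have "of_int z \<le> r" using r z by simp
    then show ?thesis using z by (simp add: le_floor_iff)
  qed
  then have "Wf y \<le> ereal (real_of_int \<lfloor>r\<rfloor>)" unfolding Wf_def by (intro SUP_least) auto
  then have "r = real_of_int \<lfloor>r\<rfloor>" using r by (simp add: antisym)
  then show ?thesis using r by (cases "0 \<le> r") (auto simp: hN_def max_def)
qed

context TS begin

definition N :: "'a \<Rightarrow> nat" where "N \<omega> = hN (W \<omega>)"
definition N' :: "'a \<Rightarrow> nat" where "N' \<omega> = hN (W' \<omega>)"
definition NX :: "'a \<Rightarrow> nat" where "NX \<omega> = nat \<lfloor>X 0 \<omega>\<rfloor>"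
definition NC :: "'a \<Rightarrow> nat" where "NC \<omega> = nat \<lfloor>c * \<theta> 0 \<omega>\<rfloor>"

lemma N_meas[measurable]: "N \<in> measurable M (count_space UNIV)" unfolding N_def[abs_def] by measurable
lemma N'_meas[measurable]: "N' \<in> measurable M (count_space UNIV)" unfolding N'_def[abs_def] by measurable
lemma NX_meas[measurable]: "NX \<in> measurable M (count_space UNIV)" unfolding NX_def[abs_def] by measurable
lemma NC_meas[measurable]: "NC \<in> measurable M (count_space UNIV)" unfolding NC_def[abs_def] by measurable

lemma X_NX: "\<omega> \<in> space M \<Longrightarrow> X 0 \<omega> = real (NX \<omega>)"
  using natX[of \<omega> 0] by (auto simp: NX_def elim!: Nats_cases)
lemma C_NC: "\<omega> \<in> space M \<Longrightarrow> c * \<theta> 0 \<omega> = real (NC \<omega>)"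
  using nat\<theta>[of \<omega> 0] by (auto simp: NC_def elim!: Nats_cases)
lemma Y0_int: "\<omega> \<in> space M \<Longrightarrow> Yv 0 \<omega> = real_of_int (int (NX \<omega>) - int (NC \<omega>))"
  by (simp add: Yv_def X_NX C_NC)

lemma Yv_Ints: "\<omega> \<in> space M \<Longrightarrow> Yv i \<omega> \<in> \<int>"
  using natX[of \<omega> i] nat\<theta>[of \<omega> i] unfolding Yv_def by (auto elim!: Nats_cases)

lemma W_N: "\<omega> \<in> space M \<Longrightarrow> W \<omega> < \<infinity> \<Longrightarrow> max 0 (W \<omega>) = ereal (real (N \<omega>))"
  unfolding N_def W_def by (rule Wf_int) (auto intro: Yv_Ints)

lemma W'_N': "\<omega> \<in> space M \<Longrightarrow> W' \<omega> < \<infinity> \<Longrightarrow> max 0 (W' \<omega>) = ereal (real (N' \<omega>))"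
  unfolding N'_def W'_def by (rule Wf_int) (auto intro: Yv_Ints)

lemma W_fin_iff: "W \<omega> < \<infinity> \<longleftrightarrow> W' \<omega> < \<infinity>"
  unfolding W_def W'_def by (rule Wf_fin_shift)

lemma AE_N_rec: "AE \<omega> in M. N \<omega> = nat (int (NX \<omega>) - int (NC \<omega>) + int (N' \<omega>))"
  using AE_W_fin
proof (rule AE_mp, intro AE_I2 impI)
  fix \<omega> assume w: "\<omega> \<in> space M" and f: "W \<omega> < \<infinity>"
  have f': "W' \<omega> < \<infinity>" using f W_fin_iff by simp
  have "ereal (real (N \<omega>)) = max 0 (ereal (Yv 0 \<omega>) + max 0 (W' \<omega>))"
    using W_N[OF w f] W_shift[of \<omega>] by simp
  also have "\<dots> = ereal (max 0 (Yv 0 \<omega> + real (N' \<omega>)))"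
    using W'_N'[OF w f'] by (simp add: zero_ereal_def)
  finally have "real (N \<omega>) = max 0 (real_of_int (int (NX \<omega>) - int (NC \<omega>)) + real (N' \<omega>))"
    using Y0_int[OF w] by (simp add: max_def split: if_splits)
  then show "N \<omega> = nat (int (NX \<omega>) - int (NC \<omega>) + int (N' \<omega>))"
    by linarith
qed

lemma pi_N: "pi_M M X \<theta> c i = prob {\<omega>\<in>space M. N \<omega> = i}"
  unfolding pi_M_def W_walk
proof (rule finite_measure_eq_AE)
  show "AE x in M. (x \<in> {\<omega> \<in> space M. max 0 (W \<omega>) = ereal (real i)}) = (x \<in> {\<omega> \<in> space M. N \<omega> = i})"
    using AE_W_fin by (rule AE_mp) (auto intro!: AE_I2 simp: W_N)
qed auto

lemma phi_N: "surv_phi M X \<theta> c (Suc i) = prob {\<omega>\<in>space M. N \<omega> \<le> i}"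
  unfolding surv_phi_def W_walk
proof (rule finite_measure_eq_AE)
  show "AE x in M. (x \<in> {\<omega> \<in> space M. W \<omega> < ereal (real (Suc i))}) = (x \<in> {\<omega> \<in> space M. N \<omega> \<le> i})"
    using AE_W_fin
  proof (rule AE_mp, intro AE_I2 impI)
    fix x assume x: "x \<in> space M" "W x < \<infinity>"
    have "W x < ereal (real (Suc i)) \<longleftrightarrow> max 0 (W x) < ereal (real (Suc i))"
      by (cases "W x") (auto simp: max_def)
    also have "\<dots> \<longleftrightarrow> real (N x) < 1 + real i" using W_N[OF x] by simp
    also have "\<dots> \<longleftrightarrow> N x \<le> i" by (metis of_nat_1 of_nat_add of_nat_less_iff less_Suc_eq_le add.commute plus_1_eq_Suc)
    finally show "(x \<in> {\<omega> \<in> space M. W \<omega> < ereal (real (Suc i))}) = (x \<in> {\<omega> \<in> space M. N \<omega> \<le> i})"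
      using x by simp
  qed
qed auto

lemma distr_N': "distr M (count_space UNIV) N' = distr M (count_space UNIV) N"
proof -
  have "distr M (count_space UNIV) N' = distr (distr M borel W') (count_space UNIV) hN"
    by (subst distr_distr) (auto simp: comp_def N'_def[abs_def])
  also have "\<dots> = distr (distr M borel W) (count_space UNIV) hN" by (simp add: distr_W')
  also have "\<dots> = distr M (count_space UNIV) N"
    by (subst distr_distr) (auto simp: comp_def N_def[abs_def])
  finally show ?thesis .
qed

lemma prob_N': "prob {\<omega>\<in>space M. N' \<omega> = i} = prob {\<omega>\<in>space M. N \<omega> = i}"
proof -
  have "measure (distr M (count_space UNIV) N') {i} = measure (distr M (count_space UNIV) N) {i}"
    by (simp add: distr_N')
  then show ?thesis by (simp add: measure_distr vimage_def Int_def conj_commute)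
qed

lemma integral_N':
  fixes g :: "nat \<Rightarrow> complex"
  shows "(\<integral>\<omega>. g (N' \<omega>) \<partial>M) = (\<integral>\<omega>. g (N \<omega>) \<partial>M)"
proof -
  have "(\<integral>\<omega>. g (N' \<omega>) \<partial>M) = (\<integral>k. g k \<partial>distr M (count_space UNIV) N')"
    by (subst integral_distr) auto
  also have "\<dots> = (\<integral>k. g k \<partial>distr M (count_space UNIV) N)" by (simp add: distr_N')
  also have "\<dots> = (\<integral>\<omega>. g (N \<omega>) \<partial>M)" by (subst integral_distr) auto
  finally show ?thesis .
qed

lemma indep_Y0_N': "indep_var borel (Yv 0) borel (\<lambda>\<omega>. real (N' \<omega>))"
proof -
  have iV: "indep_vars (\<lambda>_. borel :: real measure) V UNIV"
    using indep by (simp add: V_def[abs_def])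
  let ?A = "{Inl 0, Inr 0} :: (nat + nat) set"
  have disj: "?A \<inter> range sh = {}" by (auto simp: sh_def split: sum.splits)
  have i1: "indep_var (PiM ?A (\<lambda>_. borel)) (\<lambda>\<omega>. restrict (\<lambda>k. V k \<omega>) ?A)
                      (PiM (range sh) (\<lambda>_. borel)) (\<lambda>\<omega>. restrict (\<lambda>k. V k \<omega>) (range sh))"
    by (rule indep_var_restrict[OF iV disj]) auto
  have g1: "(\<lambda>f. f (Inl 0) - c * f (Inr 0)) \<in> borel_measurable (PiM ?A (\<lambda>_. borel :: real measure))"
    by measurable
  have shm: "(\<lambda>f. \<lambda>k. f (sh k)) \<in> measurable (PiM (range sh) (\<lambda>_. borel :: real measure)) PB"
    by (rule measurable_PiM_single') (auto simp: space_PiM)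
  have g2': "(\<lambda>f. Wf (toY (\<lambda>k. f (sh k)))) \<in> borel_measurable (PiM (range sh) (\<lambda>_. borel :: real measure))"
    using measurable_comp[OF measurable_comp[OF shm toY_meas] Wf_meas] by (simp add: comp_def)
  have g2: "(\<lambda>f. real (hN (Wf (toY (\<lambda>k. f (sh k)))))) \<in> borel_measurable (PiM (range sh) (\<lambda>_. borel :: real measure))"
    using g2' by measurable
  have "indep_var borel ((\<lambda>f. f (Inl 0) - c * f (Inr 0)) \<circ> (\<lambda>\<omega>. restrict (\<lambda>k. V k \<omega>) ?A))
     borel ((\<lambda>f. real (hN (Wf (toY (\<lambda>k. f (sh k)))))) \<circ> (\<lambda>\<omega>. restrict (\<lambda>k. V k \<omega>) (range sh)))"
    using i1 g1 g2 by (rule indep_var_compose)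
  moreover have "((\<lambda>f. real (hN (Wf (toY (\<lambda>k. f (sh k)))))) \<circ> (\<lambda>\<omega>. restrict (\<lambda>k. V k \<omega>) (range sh)))
     = (\<lambda>\<omega>. real (N' \<omega>))"
    by (simp add: comp_def N'_def[abs_def] W'_def toY_Vsh[symmetric])
  moreover have "((\<lambda>f. f (Inl 0) - c * f (Inr 0)) \<circ> (\<lambda>\<omega>. restrict (\<lambda>k. V k \<omega>) ?A)) = Yv 0"
    by (simp add: comp_def fun_eq_iff V_def Yv_def)
  ultimately show ?thesis by simp
qed

lemma indep_X0_C0: "indep_var borel (X 0) borel (\<lambda>\<omega>. c * \<theta> 0 \<omega>)"
proof -
  have iV: "indep_vars (\<lambda>_. borel :: real measure) V UNIV"
    using indep by (simp add: V_def[abs_def])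
  have i1: "indep_var (PiM {Inl 0} (\<lambda>_. borel)) (\<lambda>\<omega>. restrict (\<lambda>k. V k \<omega>) {Inl 0})
                      (PiM {Inr 0} (\<lambda>_. borel)) (\<lambda>\<omega>. restrict (\<lambda>k. V k \<omega>) {Inr 0})"
    by (rule indep_var_restrict[OF iV]) auto
  have g1: "(\<lambda>f. f (Inl 0)) \<in> borel_measurable (PiM {Inl 0} (\<lambda>_. borel :: real measure))"
    by measurable
  have g2: "(\<lambda>f. c * f (Inr 0)) \<in> borel_measurable (PiM {Inr 0} (\<lambda>_. borel :: real measure))"
    by measurable
  have "indep_var borel ((\<lambda>f. f (Inl 0)) \<circ> (\<lambda>\<omega>. restrict (\<lambda>k. V k \<omega>) {Inl 0}))
     borel ((\<lambda>f. c * f (Inr 0)) \<circ> (\<lambda>\<omega>. restrict (\<lambda>k. V k \<omega>) {Inr 0}))"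
    using i1 g1 g2 by (rule indep_var_compose)
  then show ?thesis
    by (simp add: comp_def V_def)
qed

end

lemma dsum_eval:
  fixes s :: complex and i0 :: nat and z :: int
  assumes z: "- int m \<le> z"
  shows "(\<Sum>i<m. \<Sum>j\<in>{i+1..m}. (if i0 = i \<and> z = - int j then 1 else 0) * (1 - s powi (int i - int j)))
       = (if z + int i0 < 0 then 1 - s powi (z + int i0) else 0)"
proof -
  have eq: "(if i0 = i \<and> z = - int j then 1 else 0) * (1 - s powi (int i - int j)) =
     (if j = nat (-z) then (if i = i0 \<and> z < 0 then 1 - s powi (z + int i0) else 0) else 0)"
    if "j \<in> {i+1..m}" for i j using that by auto
  have "(\<Sum>i<m. \<Sum>j\<in>{i+1..m}. (if i0 = i \<and> z = - int j then 1 else 0) * (1 - s powi (int i - int j)))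
     = (\<Sum>i<m. if nat (-z) \<in> {i+1..m} then (if i = i0 \<and> z < 0 then 1 - s powi (z + int i0) else 0) else 0)"
  proof (intro sum.cong refl)
    fix i assume "i \<in> {..<m}"
    have "(\<Sum>j\<in>{i+1..m}. (if i0 = i \<and> z = - int j then 1 else 0) * (1 - s powi (int i - int j)))
      = (\<Sum>j\<in>{i+1..m}. if j = nat (-z) then (if i = i0 \<and> z < 0 then 1 - s powi (z + int i0) else 0) else 0)"
      by (rule sum.cong[OF refl eq])
    also have "\<dots> = (if nat (-z) \<in> {i+1..m} then (if i = i0 \<and> z < 0 then 1 - s powi (z + int i0) else 0) else 0)"
      by (rule sum.delta) simp
    finally show "(\<Sum>j\<in>{i+1..m}. (if i0 = i \<and> z = - int j then 1 else 0) * (1 - s powi (int i - int j)))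
      = (if nat (-z) \<in> {i+1..m} then (if i = i0 \<and> z < 0 then 1 - s powi (z + int i0) else 0) else 0)" .
  qed
  also have "\<dots> = (\<Sum>i<m. if i = i0 then (if nat (-z) \<in> {i0+1..m} \<and> z < 0 then 1 - s powi (z + int i0) else 0) else 0)"
    by (intro sum.cong refl) auto
  also have "\<dots> = (if i0 < m then (if nat (-z) \<in> {i0+1..m} \<and> z < 0 then 1 - s powi (z + int i0) else 0) else 0)"
    by (simp add: sum.delta')
  also have "\<dots> = (if z + int i0 < 0 then 1 - s powi (z + int i0) else 0)"
    using z by auto
  finally show ?thesis .
qed

context TS begin

definition ZY :: "'a \<Rightarrow> int" where "ZY \<omega> = int (NX \<omega>) - int (NC \<omega>)"

lemma ZY_meas[measurable]: "ZY \<in> measurable M (count_space UNIV)"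
  unfolding ZY_def[abs_def] by measurable

lemma Y0_ZY: "\<omega> \<in> space M \<Longrightarrow> Yv 0 \<omega> = real_of_int (ZY \<omega>)"
  by (simp add: Y0_int ZY_def)

lemma AE_ZY_ge: "AE \<omega> in M. - int m \<le> ZY \<omega>"
  using AE_Y_ge by (rule AE_mp) (auto intro!: AE_I2 simp: Y0_ZY dest!: spec[of _ 0])

lemma AE_NC: "AE \<omega> in M. NC \<omega> \<le> m"
  using AE_bound by (rule AE_mp) (auto intro!: AE_I2 simp: C_NC dest!: spec[of _ 0])

lemma pgf_X: "norm s \<le> 1 \<Longrightarrow> pgf M (X 0) s = (\<integral>\<omega>. s ^ NX \<omega> \<partial>M)"
  unfolding pgf_def
proof (rule sums_unique[symmetric])
  assume s: "norm s \<le> 1"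
  have "{\<omega> \<in> space M. X 0 \<omega> = real k} = {\<omega> \<in> space M. NX \<omega> = k}" for k
    by (auto simp: X_NX)
  then show "(\<lambda>k. complex_of_real (prob {\<omega> \<in> space M. X 0 \<omega> = real k}) * s ^ k) sums (\<integral>\<omega>. s ^ NX \<omega> \<partial>M)"
    using pgf_sums_le1[OF NX_meas s] by simp
qed

lemma pgf_C: "pgf M (\<lambda>\<omega>. c * \<theta> 0 \<omega>) t = (\<integral>\<omega>. t ^ NC \<omega> \<partial>M)"
  unfolding pgf_def
proof (rule sums_unique[symmetric])
  have "{\<omega> \<in> space M. c * \<theta> 0 \<omega> = real k} = {\<omega> \<in> space M. NC \<omega> = k}" for k
    by (auto simp: C_NC)
  then show "(\<lambda>k. complex_of_real (prob {\<omega> \<in> space M. c * \<theta> 0 \<omega> = real k}) * t ^ k) sums (\<integral>\<omega>. t ^ NC \<omega> \<partial>M)"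
    using pgf_sums_bounded[OF NC_meas AE_NC] by simp
qed

lemma pgfM_N: "norm s \<le> 1 \<Longrightarrow> pgf_M M X \<theta> c s = (\<integral>\<omega>. s ^ N \<omega> \<partial>M)"
  unfolding pgf_M_def pi_N using pgf_sums_le1[OF N_meas] by (simp add: sums_iff)

lemma int_powNC: "integrable M (\<lambda>\<omega>. t ^ NC \<omega>)" for t :: complex
proof (rule Bochner_Integration.integrable_bound[where f="\<lambda>_. max 1 (norm t) ^ m"])
  show "AE x in M. norm (t ^ NC x) \<le> norm (max 1 (norm t) ^ m)"
    using AE_NC
  proof (rule AE_mp, intro AE_I2 impI)
    fix x assume "NC x \<le> m"
    have "norm (t ^ NC x) \<le> max 1 (norm t) ^ NC x" by (simp add: norm_power power_mono)
    also have "\<dots> \<le> max 1 (norm t) ^ m" using \<open>NC x \<le> m\<close> by (intro power_increasing) auto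
    finally show "norm (t ^ NC x) \<le> norm (max 1 (norm t) ^ m)" by simp
  qed
qed auto

lemma int_powN: "norm s \<le> 1 \<Longrightarrow> integrable M (\<lambda>\<omega>. s ^ Z \<omega>)" if "Z \<in> measurable M (count_space UNIV)" for s :: complex and Z
proof (rule Bochner_Integration.integrable_bound[where f="\<lambda>_. 1::real"])
  assume "norm s \<le> 1"
  then show "AE x in M. norm (s ^ Z x) \<le> norm (1::real)"
    by (auto simp: norm_power power_le_one)
qed (use that in auto)

lemma Gy: assumes s: "s \<noteq> 0" "norm s \<le> 1"
  shows "pgf_diff M (X 0) (\<lambda>\<omega>. c * \<theta> 0 \<omega>) s = (\<integral>\<omega>. s powi ZY \<omega> \<partial>M)"
proof -
  have g1: "(\<lambda>x::real. s ^ nat \<lfloor>x\<rfloor>) \<in> borel_measurable borel" by measurable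
  have g2: "(\<lambda>x::real. (1/s) ^ nat \<lfloor>x\<rfloor>) \<in> borel_measurable borel" by measurable
  have "indep_var borel ((\<lambda>x::real. s ^ nat \<lfloor>x\<rfloor>) \<circ> X 0) borel ((\<lambda>x::real. (1/s) ^ nat \<lfloor>x\<rfloor>) \<circ> (\<lambda>\<omega>. c * \<theta> 0 \<omega>))"
    using indep_X0_C0 g1 g2 by (rule indep_var_compose)
  then have iv: "indep_var borel (\<lambda>\<omega>. s ^ NX \<omega>) borel (\<lambda>\<omega>. (1/s) ^ NC \<omega>)"
    by (simp add: comp_def NX_def[abs_def] NC_def[abs_def])
  have "pgf_diff M (X 0) (\<lambda>\<omega>. c * \<theta> 0 \<omega>) s = (\<integral>\<omega>. s ^ NX \<omega> \<partial>M) * (\<integral>\<omega>. (1/s) ^ NC \<omega> \<partial>M)"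
    unfolding pgf_diff_def using pgf_X[OF s(2)] pgf_C by simp
  also have "\<dots> = (\<integral>\<omega>. s ^ NX \<omega> * (1/s) ^ NC \<omega> \<partial>M)"
    by (rule indep_var_lebesgue_integral[OF iv, symmetric]) (auto intro: int_powN[OF NX_meas s(2)] int_powNC)
  also have "\<dots> = (\<integral>\<omega>. s powi ZY \<omega> \<partial>M)"
    using s by (intro Bochner_Integration.integral_cong refl)
       (simp add: ZY_def power_int_diff power_divide divide_inverse power_inverse)
  finally show ?thesis .
qed

end

lemma powi_bound:
  fixes r :: real assumes r: "0 < r" "r \<le> 1" and z: "- int m \<le> z"
  shows "r powi z \<le> (1 / r) ^ m"
proof -
  have "r powi z = r powi (z + int m) * r powi (- int m)"
    using r by (simp add: power_int_add[symmetric])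
  also have "r powi (z + int m) = r ^ nat (z + int m)"
    using z by (metis nat_0_le power_int_of_nat add.commute le_minus_iff diff_ge_0_iff_ge minus_le_iff add_le_cancel_left add_0_right add.right_inverse)
  also have "\<dots> \<le> 1" using r by (simp add: power_le_one)
  also have "r powi (- int m) = (1 / r) ^ m" by (simp add: power_int_minus power_inverse divide_inverse)
  finally show ?thesis using r by (simp add: mult_left_le_one_le)
qed

context TS begin

definition EE :: "nat \<Rightarrow> nat \<Rightarrow> 'a set" where
  "EE i j = {x\<in>space M. Yv 0 x \<in> {- real j} \<and> real (N' x) \<in> {real i}}"

lemma EE_sets[measurable]: "EE i j \<in> sets M" unfolding EE_def by measurable

lemma prob_EE: "prob (EE i j) = f_pmf M (X 0) (\<theta> 0) c (- int j) * pi_M M X \<theta> c i"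
proof -
  have "prob (EE i j) = \<P>(x in M. Yv 0 x \<in> {- real j}) * \<P>(x in M. real (N' x) \<in> {real i})"
    unfolding EE_def by (rule prob_indep_random_variable[OF indep_Y0_N']) auto
  also have "\<P>(x in M. Yv 0 x \<in> {- real j}) = f_pmf M (X 0) (\<theta> 0) c (- int j)"
    by (simp add: f_pmf_def Yv_def)
  also have "\<P>(x in M. real (N' x) \<in> {real i}) = pi_M M X \<theta> c i"
    by (simp add: pi_N prob_N'[symmetric])
  finally show ?thesis .
qed

lemma part1:
  fixes s :: complex assumes s: "s \<noteq> 0" "norm s \<le> 1"
  shows "(\<Sum>i<m. complex_of_real (pi_M M X \<theta> c i) *
            (\<Sum>j\<in>{i+1..m}. (1 - s powi (int i - int j)) * complex_of_real (f_pmf M (X 0) (\<theta> 0) c (- int j))))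
        = pgf_M M X \<theta> c s * (1 - pgf_diff M (X 0) (\<lambda>\<omega>. c * \<theta> 0 \<omega>) s)"
proof -
  define R where "R = (\<Sum>i<m. \<Sum>j\<in>{i+1..m}. complex_of_real (prob (EE i j)) * (1 - s powi (int i - int j)))"
  define G where "G = (\<integral>\<omega>. s ^ N \<omega> \<partial>M)"
  define Gy where "Gy = (\<integral>\<omega>. s powi ZY \<omega> \<partial>M)"
  have ns: "0 < norm s" using s by simp
  have int_pZY: "integrable M (\<lambda>\<omega>. s powi ZY \<omega>)"
  proof (rule Bochner_Integration.integrable_bound[where f="\<lambda>_. (1 / norm s) ^ m"])
    show "AE x in M. norm (s powi ZY x) \<le> norm ((1 / norm s) ^ m)"
      using AE_ZY_ge by (rule AE_mp) (auto intro!: AE_I2 simp: norm_power_int intro: powi_bound[OF ns s(2)])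
  qed auto
  have int_prod: "integrable M (\<lambda>\<omega>. s powi ZY \<omega> * s ^ N' \<omega>)"
  proof (rule Bochner_Integration.integrable_bound[where f="\<lambda>_. (1 / norm s) ^ m"])
    show "AE x in M. norm (s powi ZY x * s ^ N' x) \<le> norm ((1 / norm s) ^ m)"
      using AE_ZY_ge
    proof (rule AE_mp, intro AE_I2 impI)
      fix x assume "- int m \<le> ZY x"
      then have a: "norm s powi ZY x \<le> (1 / norm s) ^ m" by (rule powi_bound[OF ns s(2)])
      have b: "norm s ^ N' x \<le> 1" using s by (simp add: power_le_one)
      have "norm (s powi ZY x * s ^ N' x) = norm s powi ZY x * norm s ^ N' x"
        by (simp add: norm_mult norm_power_int norm_power)
      also have "\<dots> \<le> (1 / norm s) ^ m * 1"
        using a b by (intro mult_mono) auto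
      finally show "norm (s powi ZY x * s ^ N' x) \<le> norm ((1 / norm s) ^ m)" by simp
    qed
  qed auto
  have int_ind: "integrable M (\<lambda>\<omega>. complex_of_real (indicator (EE i j) \<omega>) * (1 - s powi (int i - int j)))" for i j
    by (rule Bochner_Integration.integrable_bound[where f="\<lambda>_. norm (1 - s powi (int i - int j))"])
       (auto simp: indicator_def norm_mult)
  have pw: "AE \<omega> in M. s ^ N \<omega> = s powi ZY \<omega> * s ^ N' \<omega> +
      (\<Sum>i<m. \<Sum>j\<in>{i+1..m}. complex_of_real (indicator (EE i j) \<omega>) * (1 - s powi (int i - int j)))"
    using AE_ZY_ge AE_N_rec
  proof (rule AE_mp[OF AE_conjI], intro AE_I2 impI, elim conjE)
    fix \<omega> assume w: "\<omega> \<in> space M" and z: "- int m \<le> ZY \<omega>"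
      and nr: "N \<omega> = nat (int (NX \<omega>) - int (NC \<omega>) + int (N' \<omega>))"
    define t where "t = ZY \<omega> + int (N' \<omega>)"
    have nr': "N \<omega> = nat t" using nr by (simp add: t_def ZY_def)
    have ind: "indicator (EE i j) \<omega> = (if N' \<omega> = i \<and> ZY \<omega> = - int j then 1 else (0::real))" for i j
    proof -
      have "Yv 0 \<omega> = - real j \<longleftrightarrow> ZY \<omega> = - int j"
        using Y0_ZY[OF w] by (metis of_int_eq_iff of_int_minus of_int_of_nat_eq)
      then show ?thesis using w by (auto simp: EE_def indicator_def)
    qed
    have "(\<Sum>i<m. \<Sum>j\<in>{i+1..m}. complex_of_real (indicator (EE i j) \<omega>) * (1 - s powi (int i - int j)))
        = (\<Sum>i<m. \<Sum>j\<in>{i+1..m}. (if N' \<omega> = i \<and> ZY \<omega> = - int j then 1 else 0) * (1 - s powi (int i - int j)))"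
      by (simp add: ind if_distrib[of complex_of_real] cong: if_cong)
    also have "\<dots> = (if t < 0 then 1 - s powi t else 0)"
      unfolding t_def by (rule dsum_eval[OF z])
    finally have S: "(\<Sum>i<m. \<Sum>j\<in>{i+1..m}. complex_of_real (indicator (EE i j) \<omega>) * (1 - s powi (int i - int j)))
       = (if t < 0 then 1 - s powi t else 0)" .
    have P: "s powi ZY \<omega> * s ^ N' \<omega> = s powi t"
      using s(1) by (simp add: t_def power_int_add)
    have "s ^ N \<omega> = (if t < 0 then 1 else s powi t)"
      using nr' by (auto simp: power_int_def)
    then show "s ^ N \<omega> = s powi ZY \<omega> * s ^ N' \<omega> +
      (\<Sum>i<m. \<Sum>j\<in>{i+1..m}. complex_of_real (indicator (EE i j) \<omega>) * (1 - s powi (int i - int j)))"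
      unfolding S P by simp
  qed
  have G1: "G = (\<integral>\<omega>. s powi ZY \<omega> * s ^ N' \<omega> + (\<Sum>i<m. \<Sum>j\<in>{i+1..m}. complex_of_real (indicator (EE i j) \<omega>) * (1 - s powi (int i - int j))) \<partial>M)"
    unfolding G_def by (rule integral_cong_AE) (use pw in auto)
  also have "\<dots> = (\<integral>\<omega>. s powi ZY \<omega> * s ^ N' \<omega> \<partial>M) + R"
  proof -
    have "(\<integral>\<omega>. (\<Sum>i<m. \<Sum>j\<in>{i+1..m}. complex_of_real (indicator (EE i j) \<omega>) * (1 - s powi (int i - int j))) \<partial>M) = R"
    proof -
      have "(\<integral>\<omega>. (\<Sum>i<m. \<Sum>j\<in>{i+1..m}. complex_of_real (indicator (EE i j) \<omega>) * (1 - s powi (int i - int j))) \<partial>M)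
          = (\<Sum>i<m. \<Sum>j\<in>{i+1..m}. (\<integral>\<omega>. complex_of_real (indicator (EE i j) \<omega>) * (1 - s powi (int i - int j)) \<partial>M))"
        using int_ind by (simp add: integral_sum)
      also have "\<dots> = R" unfolding R_def
        by (intro sum.cong refl) (simp add: Int_absorb2 EE_def)
      finally show ?thesis .
    qed
    moreover have "integrable M (\<lambda>\<omega>. (\<Sum>i<m. \<Sum>j\<in>{i+1..m}. complex_of_real (indicator (EE i j) \<omega>) * (1 - s powi (int i - int j))))"
      using int_ind by auto
    ultimately show ?thesis using int_prod by simp
  qed
  finally have G2: "G = (\<integral>\<omega>. s powi ZY \<omega> * s ^ N' \<omega> \<partial>M) + R" .
  have prod: "(\<integral>\<omega>. s powi ZY \<omega> * s ^ N' \<omega> \<partial>M) = Gy * G"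
  proof -
    have g1: "(\<lambda>y::real. s powi \<lfloor>y\<rfloor>) \<in> borel_measurable borel" by measurable
    have g2: "(\<lambda>r::real. s ^ nat \<lfloor>r\<rfloor>) \<in> borel_measurable borel" by measurable
    have iv: "indep_var borel ((\<lambda>y::real. s powi \<lfloor>y\<rfloor>) \<circ> Yv 0) borel ((\<lambda>r::real. s ^ nat \<lfloor>r\<rfloor>) \<circ> (\<lambda>\<omega>. real (N' \<omega>)))"
      using indep_Y0_N' g1 g2 by (rule indep_var_compose)
    have e1: "((\<lambda>y::real. s powi \<lfloor>y\<rfloor>) \<circ> Yv 0) \<omega> = s powi ZY \<omega>" if "\<omega> \<in> space M" for \<omega>
      using Y0_ZY[OF that] by simp
    have e2: "((\<lambda>r::real. s ^ nat \<lfloor>r\<rfloor>) \<circ> (\<lambda>\<omega>. real (N' \<omega>))) \<omega> = s ^ N' \<omega>" for \<omega>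
      by simp
    have i1: "integrable M ((\<lambda>y::real. s powi \<lfloor>y\<rfloor>) \<circ> Yv 0)"
    proof -
      have "integrable M ((\<lambda>y::real. s powi \<lfloor>y\<rfloor>) \<circ> Yv 0) \<longleftrightarrow> integrable M (\<lambda>\<omega>. s powi ZY \<omega>)"
        by (rule Bochner_Integration.integrable_cong) (auto simp: Y0_ZY)
      then show ?thesis using int_pZY by simp
    qed
    have i2: "integrable M ((\<lambda>r::real. s ^ nat \<lfloor>r\<rfloor>) \<circ> (\<lambda>\<omega>. real (N' \<omega>)))"
      unfolding e2 using int_powN[OF N'_meas s(2)] by simp
    have "(\<integral>\<omega>. s powi ZY \<omega> * s ^ N' \<omega> \<partial>M) =
        (\<integral>\<omega>. ((\<lambda>y::real. s powi \<lfloor>y\<rfloor>) \<circ> Yv 0) \<omega> * ((\<lambda>r::real. s ^ nat \<lfloor>r\<rfloor>) \<circ> (\<lambda>\<omega>. real (N' \<omega>))) \<omega> \<partial>M)"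
      by (intro Bochner_Integration.integral_cong refl) (simp only: e1 e2)
    also have "\<dots> = (\<integral>\<omega>. ((\<lambda>y::real. s powi \<lfloor>y\<rfloor>) \<circ> Yv 0) \<omega> \<partial>M) * (\<integral>\<omega>. ((\<lambda>r::real. s ^ nat \<lfloor>r\<rfloor>) \<circ> (\<lambda>\<omega>. real (N' \<omega>))) \<omega> \<partial>M)"
      by (rule indep_var_lebesgue_integral[OF iv i1 i2])
    also have "(\<integral>\<omega>. ((\<lambda>y::real. s powi \<lfloor>y\<rfloor>) \<circ> Yv 0) \<omega> \<partial>M) = Gy"
      unfolding Gy_def by (intro Bochner_Integration.integral_cong refl) (simp only: e1)
    also have "(\<integral>\<omega>. ((\<lambda>r::real. s ^ nat \<lfloor>r\<rfloor>) \<circ> (\<lambda>\<omega>. real (N' \<omega>))) \<omega> \<partial>M) = G"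
      unfolding G_def e2 by (rule integral_N')
    finally show ?thesis .
  qed
  have R_eq: "R = (\<Sum>i<m. complex_of_real (pi_M M X \<theta> c i) *
            (\<Sum>j\<in>{i+1..m}. (1 - s powi (int i - int j)) * complex_of_real (f_pmf M (X 0) (\<theta> 0) c (- int j))))"
    unfolding R_def prob_EE sum_distrib_left
    by (intro sum.cong refl) (simp add: mult.commute mult.left_commute)
  have "pgf_M M X \<theta> c s = G" using pgfM_N[OF s(2)] by (simp add: G_def)
  moreover have "pgf_diff M (X 0) (\<lambda>\<omega>. c * \<theta> 0 \<omega>) s = Gy" using Gy[OF s] by (simp add: Gy_def)
  moreover have H: "G = Gy * G + R" using G2 unfolding prod .
  have "G - Gy * G = R" using arg_cong[OF H, of "\<lambda>x. x - Gy * G"] by simp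
  then have "R = G * (1 - Gy)" by (simp add: right_diff_distrib mult.commute)
  ultimately show ?thesis using R_eq by simp
qed

end

lemma tel: fixes s :: complex
  shows "p \<le> Suc q \<Longrightarrow> (s - 1) * (\<Sum>j\<in>{p..q}. s ^ j) = s ^ Suc q - s ^ p"
proof (induction q)
  case 0 then show ?case by (cases p) (auto simp: algebra_simps)
next
  case (Suc q)
  show ?case
  proof (cases "p = Suc (Suc q)")
    case True then show ?thesis by simp
  next
    case False
    then have "p \<le> Suc q" using Suc.prems by simp
    then have "{p..Suc q} = insert (Suc q) {p..q}" by auto
    then show ?thesis using Suc.IH[OF \<open>p \<le> Suc q\<close>] by (simp add: algebra_simps)
  qed
qed

lemma alg:
  fixes s :: complex and a :: "nat \<Rightarrow> complex"
  assumes im: "i < m" and s: "s \<noteq> 0"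
  shows "s ^ m * (\<Sum>j\<in>{i+1..m}. (1 - s powi (int i - int j)) * a j)
       = (s - 1) * (\<Sum>j\<in>{0..m-i-1}. s ^ (j + i) * (\<Sum>l\<in>{m-j..m}. a l))"
proof -
  have "(\<Sum>j\<in>{0..m-i-1}. s ^ (j + i) * (\<Sum>l\<in>{m-j..m}. a l))
      = (\<Sum>j\<in>{0..m-i-1}. \<Sum>l\<in>{l\<in>{i+1..m}. m - j \<le> l}. s ^ (j + i) * a l)"
  proof (intro sum.cong refl)
    fix j assume j: "j \<in> {0..m-i-1}"
    have "{m-j..m} = {l\<in>{i+1..m}. m - j \<le> l}" using j im by auto
    then show "s ^ (j + i) * (\<Sum>l\<in>{m-j..m}. a l) = (\<Sum>l\<in>{l\<in>{i+1..m}. m - j \<le> l}. s ^ (j + i) * a l)"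
      by (simp add: sum_distrib_left)
  qed
  also have "\<dots> = (\<Sum>l\<in>{i+1..m}. \<Sum>j\<in>{j\<in>{0..m-i-1}. m - j \<le> l}. s ^ (j + i) * a l)"
    by (rule sum.swap_restrict) auto
  also have "\<dots> = (\<Sum>l\<in>{i+1..m}. a l * s ^ i * (\<Sum>j\<in>{m-l..m-i-1}. s ^ j))"
  proof (intro sum.cong refl)
    fix l assume l: "l \<in> {i+1..m}"
    have "{j\<in>{0..m-i-1}. m - j \<le> l} = {m-l..m-i-1}" using l by auto
    then show "(\<Sum>j\<in>{j\<in>{0..m-i-1}. m - j \<le> l}. s ^ (j + i) * a l) = a l * s ^ i * (\<Sum>j\<in>{m-l..m-i-1}. s ^ j)"
      by (simp add: sum_distrib_left power_add mult_ac)
  qed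
  finally have "(s - 1) * (\<Sum>j\<in>{0..m-i-1}. s ^ (j + i) * (\<Sum>l\<in>{m-j..m}. a l))
     = (\<Sum>l\<in>{i+1..m}. a l * s ^ i * ((s - 1) * (\<Sum>j\<in>{m-l..m-i-1}. s ^ j)))"
    by (simp add: sum_distrib_left mult_ac)
  also have "\<dots> = (\<Sum>l\<in>{i+1..m}. a l * (s ^ m - s ^ (m - l + i)))"
  proof (intro sum.cong refl)
    fix l assume l: "l \<in> {i+1..m}"
    have "(s - 1) * (\<Sum>j\<in>{m-l..m-i-1}. s ^ j) = s ^ Suc (m-i-1) - s ^ (m - l)"
      using l by (intro tel) auto
    moreover have "Suc (m-i-1) = m - i" using im by simp
    ultimately have e: "(s - 1) * (\<Sum>j\<in>{m-l..m-i-1}. s ^ j) = s ^ (m - i) - s ^ (m - l)" by metis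
    have p1: "s ^ i * s ^ (m - i) = s ^ m" using im by (simp add: power_add[symmetric])
    have p2: "s ^ i * s ^ (m - l) = s ^ (m - l + i)" by (simp add: power_add[symmetric] add.commute)
    show "a l * s ^ i * ((s - 1) * (\<Sum>j\<in>{m-l..m-i-1}. s ^ j)) = a l * (s ^ m - s ^ (m - l + i))"
      unfolding e by (simp only: mult.assoc right_diff_distrib p1 p2)
  qed
  also have "\<dots> = s ^ m * (\<Sum>j\<in>{i+1..m}. (1 - s powi (int i - int j)) * a j)"
    unfolding sum_distrib_left
  proof (intro sum.cong refl)
    fix l assume l: "l \<in> {i+1..m}"
    have "s ^ m * s powi (int i - int l) = s powi (int m + (int i - int l))"
      using s by (simp add: power_int_add)
    also have "int m + (int i - int l) = int (m - l + i)" using l by auto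
    finally have "s ^ m * s powi (int i - int l) = s ^ (m - l + i)" by (metis power_int_of_nat)
    then show "a l * (s ^ m - s ^ (m - l + i)) = s ^ m * ((1 - s powi (int i - int l)) * a l)"
      by (simp add: algebra_simps)
  qed
  finally show ?thesis by simp
qed

lemma aux: "\<And>a b g q :: complex. a \<noteq> 0 \<Longrightarrow> b \<noteq> 1 \<Longrightarrow> q \<noteq> 1 \<Longrightarrow>
     1 / (a * (q - 1)) * (a * (g * (1 - q)) / (b - 1)) = g / (1 - b)"
proof -
  fix a b g q :: complex assume a: "a \<noteq> 0" and b: "b \<noteq> 1" and q: "q \<noteq> 1"
  have q': "q - 1 \<noteq> 0" and b': "b - 1 \<noteq> 0" and b'': "1 - b \<noteq> 0" using b q by auto
  have e: "a * (g * (1 - q)) = (a * (q - 1)) * (- g)" by (simp add: algebra_simps)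
  have "1 / (a * (q - 1)) * (a * (g * (1 - q)) / (b - 1)) = (a * (g * (1 - q))) / ((a * (q - 1)) * (b - 1))"
    by simp
  also have "\<dots> = (a * (q - 1)) * (- g) / ((a * (q - 1)) * (b - 1))" by (simp only: e)
  also have "\<dots> = - g / (b - 1)" using a q' by simp
  also have "\<dots> = g / (1 - b)" by (simp add: minus_divide_left[symmetric] divide_minus_right[symmetric])
  finally show "1 / (a * (q - 1)) * (a * (g * (1 - q)) / (b - 1)) = g / (1 - b)" .
qed

context TS begin

lemma prob_N_le: "prob {\<omega>\<in>space M. N \<omega> \<le> i} = (\<Sum>k\<le>i. prob {\<omega>\<in>space M. N \<omega> = k})"
proof -
  have "{\<omega>\<in>space M. N \<omega> \<le> i} = (\<Union>k\<in>{..i}. {\<omega>\<in>space M. N \<omega> = k})" by auto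
  moreover have "prob (\<Union>k\<in>{..i}. {\<omega>\<in>space M. N \<omega> = k}) = (\<Sum>k\<le>i. prob {\<omega>\<in>space M. N \<omega> = k})"
    by (rule finite_measure_finite_Union) (auto simp: disjoint_family_on_def)
  ultimately show ?thesis by simp
qed

lemma Xi_eq: assumes s: "norm s < 1" shows "Xi M X \<theta> c s = pgf_M M X \<theta> c s / (1 - s)"
proof -
  let ?a = "\<lambda>k. complex_of_real (pi_M M X \<theta> c k) * s ^ k"
  let ?b = "\<lambda>k. s ^ k"
  have sa: "summable (\<lambda>k. norm (?a k))"
  proof (rule summable_comparison_test'[OF summable_geometric[of "norm s"]])
    fix n
    have "pi_M M X \<theta> c n \<le> 1" by (simp add: pi_M_def)
    moreover have "0 \<le> pi_M M X \<theta> c n" by (simp add: pi_M_def)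
    ultimately show "norm (norm (?a n)) \<le> norm s ^ n"
      by (simp add: norm_mult norm_power mult_left_le_one_le)
  qed (use s in simp)
  have sb: "summable (\<lambda>k. norm (?b k))" using s by (simp add: norm_power summable_geometric)
  have "pgf_M M X \<theta> c s * (1 / (1 - s)) = (\<Sum>k. ?a k) * (\<Sum>k. ?b k)"
    using s by (simp add: pgf_M_def suminf_geometric)
  also have "\<dots> = (\<Sum>k. \<Sum>i\<le>k. ?a i * ?b (k - i))" by (rule Cauchy_product[OF sa sb])
  also have "\<dots> = Xi M X \<theta> c s"
    unfolding Xi_def
  proof (intro suminf_cong)
    fix k
    have "(\<Sum>i\<le>k. ?a i * ?b (k - i)) = (\<Sum>i\<le>k. complex_of_real (pi_M M X \<theta> c i)) * s ^ k"
      unfolding sum_distrib_right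
      by (intro sum.cong refl) (simp add: mult.assoc power_add[symmetric])
    also have "\<dots> = complex_of_real (surv_phi M X \<theta> c (k + 1)) * s ^ k"
      by (simp add: phi_N prob_N_le pi_N)
    finally show "(\<Sum>i\<le>k. ?a i * ?b (k - i)) = complex_of_real (surv_phi M X \<theta> c (k + 1)) * s ^ k" .
  qed
  finally show ?thesis by simp
qed

lemma F_sum: assumes j: "j \<le> m"
  shows "F_cdf M (X 0) (\<theta> 0) c (- int m + int j) = (\<Sum>l\<in>{m-j..m}. f_pmf M (X 0) (\<theta> 0) c (- int l))"
proof -
  have "F_cdf M (X 0) (\<theta> 0) c (- int m + int j) = prob (\<Union>l\<in>{m-j..m}. {\<omega>\<in>space M. Yv 0 \<omega> = - real l})"
    unfolding F_cdf_def
  proof (rule finite_measure_eq_AE)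
    show "AE x in M. (x \<in> {\<omega> \<in> space M. X 0 \<omega> - c * \<theta> 0 \<omega> \<le> real_of_int (- int m + int j)}) =
      (x \<in> (\<Union>l\<in>{m - j..m}. {\<omega> \<in> space M. Yv 0 \<omega> = - real l}))"
      using AE_ZY_ge
    proof (rule AE_mp, intro AE_I2 impI)
      fix x assume x: "x \<in> space M" and z: "- int m \<le> ZY x"
      have e1: "X 0 x - c * \<theta> 0 x = real_of_int (ZY x)" using Y0_ZY[OF x] by (simp add: Yv_def)
      have e2: "Yv 0 x = - real l \<longleftrightarrow> ZY x = - int l" for l
        using Y0_ZY[OF x] by (metis of_int_eq_iff of_int_minus of_int_of_nat_eq)
      have L: "(x \<in> {\<omega> \<in> space M. X 0 \<omega> - c * \<theta> 0 \<omega> \<le> real_of_int (- int m + int j)}) \<longleftrightarrow> ZY x \<le> - int m + int j"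
        using x e1 by (simp only: mem_Collect_eq of_int_le_iff) simp
      have R: "(x \<in> (\<Union>l\<in>{m - j..m}. {\<omega> \<in> space M. Yv 0 \<omega> = - real l})) \<longleftrightarrow> (\<exists>l\<in>{m-j..m}. ZY x = - int l)"
        using x e2 by auto
      have "ZY x \<le> - int m + int j \<longleftrightarrow> (\<exists>l\<in>{m-j..m}. ZY x = - int l)"
      proof
        assume "ZY x \<le> - int m + int j"
        then show "\<exists>l\<in>{m-j..m}. ZY x = - int l" using z j
          by (intro bexI[of _ "nat (- ZY x)"]) auto
      qed (use j in auto)
      then show "(x \<in> {\<omega> \<in> space M. X 0 \<omega> - c * \<theta> 0 \<omega> \<le> real_of_int (- int m + int j)}) =
        (x \<in> (\<Union>l\<in>{m - j..m}. {\<omega> \<in> space M. Yv 0 \<omega> = - real l}))"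
        using L R by simp
    qed
  qed auto
  also have "\<dots> = (\<Sum>l\<in>{m-j..m}. prob {\<omega>\<in>space M. Yv 0 \<omega> = - real l})"
    by (rule finite_measure_finite_Union) (auto simp: disjoint_family_on_def)
  also have "\<dots> = (\<Sum>l\<in>{m-j..m}. f_pmf M (X 0) (\<theta> 0) c (- int l))"
    by (simp add: f_pmf_def Yv_def)
  finally show ?thesis .
qed

lemma part3:
  fixes s :: complex
  assumes s: "norm s < 1" and nz: "s ^ m * (1 - pgf_diff M (X 0) (\<lambda>\<omega>. c * \<theta> 0 \<omega>) s) \<noteq> 0"
  shows "Xi M X \<theta> c s =
          1 / (s ^ m * (pgf_diff M (X 0) (\<lambda>\<omega>. c * \<theta> 0 \<omega>) s - 1)) *
          (\<Sum>i<m. complex_of_real (pi_M M X \<theta> c i) *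
            (\<Sum>j\<in>{0..m-i-1}. s ^ (j + i) * complex_of_real (F_cdf M (X 0) (\<theta> 0) c (- int m + int j))))"
proof -
  let ?Gy = "pgf_diff M (X 0) (\<lambda>\<omega>. c * \<theta> 0 \<omega>) s"
  let ?G = "pgf_M M X \<theta> c s"
  let ?f = "\<lambda>j. complex_of_real (f_pmf M (X 0) (\<theta> 0) c (- int j))"
  let ?T = "\<Sum>i<m. complex_of_real (pi_M M X \<theta> c i) *
            (\<Sum>j\<in>{0..m-i-1}. s ^ (j + i) * complex_of_real (F_cdf M (X 0) (\<theta> 0) c (- int m + int j)))"
  let ?R = "\<Sum>i<m. complex_of_real (pi_M M X \<theta> c i) * (\<Sum>j\<in>{i+1..m}. (1 - s powi (int i - int j)) * ?f j)"
  have sm: "s ^ m \<noteq> 0" and gy: "?Gy \<noteq> 1" using nz by auto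
  have s0: "s \<noteq> 0" using sm m_pos by (auto simp: power_0_left)
  have s1: "s \<noteq> 1" using s by auto
  have R: "?R = ?G * (1 - ?Gy)" using part1[OF s0] s by simp
  have "s ^ m * ?R = (s - 1) * ?T"
  proof -
    have "s ^ m * ?R = (\<Sum>i<m. complex_of_real (pi_M M X \<theta> c i) * (s ^ m * (\<Sum>j\<in>{i+1..m}. (1 - s powi (int i - int j)) * ?f j)))"
      by (simp add: sum_distrib_left mult_ac)
    also have "\<dots> = (\<Sum>i<m. complex_of_real (pi_M M X \<theta> c i) * ((s - 1) * (\<Sum>j\<in>{0..m-i-1}. s ^ (j + i) * (\<Sum>l\<in>{m-j..m}. ?f l))))"
      by (intro sum.cong refl arg_cong2[where f="(*)"] alg s0) auto
    also have "\<dots> = (\<Sum>i<m. (s - 1) * (complex_of_real (pi_M M X \<theta> c i) *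
            (\<Sum>j\<in>{0..m-i-1}. s ^ (j + i) * complex_of_real (F_cdf M (X 0) (\<theta> 0) c (- int m + int j)))))"
    proof (intro sum.cong refl)
      fix i assume i: "i \<in> {..<m}"
      have "(\<Sum>j\<in>{0..m-i-1}. s ^ (j + i) * (\<Sum>l\<in>{m-j..m}. ?f l)) =
            (\<Sum>j\<in>{0..m-i-1}. s ^ (j + i) * complex_of_real (F_cdf M (X 0) (\<theta> 0) c (- int m + int j)))"
      proof (intro sum.cong refl)
        fix j assume "j \<in> {0..m-i-1}"
        then have "j \<le> m" by auto
        then show "s ^ (j + i) * (\<Sum>l\<in>{m-j..m}. ?f l) = s ^ (j + i) * complex_of_real (F_cdf M (X 0) (\<theta> 0) c (- int m + int j))"
          using F_sum[of j] by simp
      qed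
      then show "complex_of_real (pi_M M X \<theta> c i) * ((s - 1) * (\<Sum>j\<in>{0..m-i-1}. s ^ (j + i) * (\<Sum>l\<in>{m-j..m}. ?f l))) =
         (s - 1) * (complex_of_real (pi_M M X \<theta> c i) *
            (\<Sum>j\<in>{0..m-i-1}. s ^ (j + i) * complex_of_real (F_cdf M (X 0) (\<theta> 0) c (- int m + int j))))"
        by (simp add: mult_ac)
    qed
    also have "\<dots> = (s - 1) * ?T" by (rule sum_distrib_left[symmetric])
    finally show ?thesis .
  qed
  then have "(s - 1) * ?T = s ^ m * (?G * (1 - ?Gy))" unfolding R by simp
  moreover have "s - 1 \<noteq> 0" using s1 by simp
  ultimately have T: "?T = s ^ m * (?G * (1 - ?Gy)) / (s - 1)"
    by (simp add: eq_divide_eq mult.commute)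
  show ?thesis unfolding Xi_eq[OF s] T by (rule aux[symmetric, OF sm s1 gy])
qed

end

definition qf :: "real \<Rightarrow> int \<Rightarrow> real" where "qf s k = (1 - s powi k) / (1 - s)"

lemma qf_lim:
  assumes sq: "sq \<longlonglongrightarrow> 1" and ne: "\<And>n. sq n \<noteq> 1"
  shows "(\<lambda>n. qf (sq n) k) \<longlonglongrightarrow> real_of_int k"
proof -
  have "((\<lambda>x::real. x powi k) has_field_derivative (of_int k * 1 powi (k - 1) * 1)) (at 1)"
    by (rule DERIV_power_int[OF DERIV_ident]) simp
  then have "((\<lambda>y::real. (y powi k - 1 powi k) / (y - 1)) \<longlongrightarrow> real_of_int k) (at 1)"
    by (simp add: has_field_derivative_iff)
  then have L: "((\<lambda>y::real. qf y k) \<longlongrightarrow> real_of_int k) (at 1)"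
  proof -
    have "(\<lambda>y::real. (y powi k - 1 powi k) / (y - 1)) = (\<lambda>y. qf y k)"
      by (rule ext) (simp add: qf_def, metis minus_diff_eq minus_divide_divide)
    then show ?thesis using \<open>((\<lambda>y::real. (y powi k - 1 powi k) / (y - 1)) \<longlongrightarrow> real_of_int k) (at 1)\<close> by simp
  qed
  have F: "filterlim sq (at 1) sequentially"
    using sq ne by (simp add: filterlim_at)
  show ?thesis by (rule filterlim_compose[OF L F])
qed

lemma qf_bound:
  fixes s :: real
  assumes s: "1/2 \<le> s" "s < 1" and k: "- int m \<le> k"
  shows "\<bar>qf s k\<bar> \<le> \<bar>real_of_int k\<bar> + real m * 2 ^ m"
proof (cases "0 \<le> k")
  case True
  then obtain n where n: "k = int n" by (metis nonneg_eq_int)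
  have "qf s k = (\<Sum>i<n. s ^ i)"
    using s by (simp add: qf_def n one_diff_power_eq)
  moreover have "0 \<le> (\<Sum>i<n. s ^ i)" using s by (intro sum_nonneg) auto
  moreover have "(\<Sum>i<n. s ^ i) \<le> (\<Sum>i<n. 1)" using s by (intro sum_mono power_le_one) auto
  ultimately have "\<bar>qf s k\<bar> \<le> \<bar>real_of_int k\<bar>" using n by simp
  moreover have "0 \<le> real m * 2 ^ m" by simp
  ultimately show ?thesis by linarith
next
  case False
  then obtain n where n: "k = - int n" and n0: "0 < n" by (metis neg_int_cases not_le)
  have nm: "n \<le> m" using k n by simp
  have sp: "0 < s ^ n" using s by simp
  have "qf s k = (1 - 1 / s ^ n) / (1 - s)"
    by (simp add: qf_def n power_int_minus power_inverse divide_inverse)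
  also have "\<dots> = - ((1 - s ^ n) / (1 - s)) / s ^ n"
    using sp s by (simp add: field_simps)
  also have "(1 - s ^ n) / (1 - s) = (\<Sum>i<n. s ^ i)"
    using s by (simp add: one_diff_power_eq)
  finally have q: "qf s k = - (\<Sum>i<n. s ^ i) / s ^ n" .
  have a: "0 \<le> (\<Sum>i<n. s ^ i)" using s by (intro sum_nonneg) auto
  have b: "(\<Sum>i<n. s ^ i) \<le> real n"
  proof -
    have "(\<Sum>i<n. s ^ i) \<le> (\<Sum>i<n. (1::real))" using s by (intro sum_mono power_le_one) auto
    then show ?thesis by simp
  qed
  have c: "1 / s ^ n \<le> 2 ^ n"
  proof -
    have "(1/2) ^ n \<le> s ^ n" using s by (intro power_mono) auto
    then show ?thesis using sp by (simp add: field_simps power_divide)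
  qed
  have sp': "0 \<le> 1 / s ^ n" using sp by simp
  have "\<bar>qf s k\<bar> = (\<Sum>i<n. s ^ i) * (1 / s ^ n)" using q a sp by (simp add: abs_div)
  also have "\<dots> \<le> real n * 2 ^ n" by (rule mult_mono[OF b c]) (use sp' in auto)
  also have "\<dots> \<le> real m * 2 ^ m" using nm by (intro mult_mono power_increasing) auto
  finally show ?thesis by simp
qed

context TS begin

lemma part1_real:
  fixes s :: real assumes s: "0 < s" "s \<le> 1"
  shows "(\<Sum>i<m. pi_M M X \<theta> c i * (\<Sum>j\<in>{i+1..m}. (1 - s powi (int i - int j)) * f_pmf M (X 0) (\<theta> 0) c (- int j)))
     = (\<integral>\<omega>. s ^ N \<omega> \<partial>M) * (1 - (\<integral>\<omega>. s powi ZY \<omega> \<partial>M))"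
proof -
  have s0: "complex_of_real s \<noteq> 0" "norm (complex_of_real s) \<le> 1" using s by auto
  have e1: "pgf_M M X \<theta> c (complex_of_real s) = complex_of_real (\<integral>\<omega>. s ^ N \<omega> \<partial>M)"
  proof -
    have "(\<integral>\<omega>. complex_of_real s ^ N \<omega> \<partial>M) = (\<integral>\<omega>. complex_of_real (s ^ N \<omega>) \<partial>M)" by simp
    also have "\<dots> = complex_of_real (\<integral>\<omega>. s ^ N \<omega> \<partial>M)" by (rule integral_complex_of_real)
    finally show ?thesis using pgfM_N[OF s0(2)] by simp
  qed
  have e2: "pgf_diff M (X 0) (\<lambda>\<omega>. c * \<theta> 0 \<omega>) (complex_of_real s) = complex_of_real (\<integral>\<omega>. s powi ZY \<omega> \<partial>M)"
  proof -
    have "(\<integral>\<omega>. complex_of_real s powi ZY \<omega> \<partial>M) = (\<integral>\<omega>. complex_of_real (s powi ZY \<omega>) \<partial>M)" by simp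
    also have "\<dots> = complex_of_real (\<integral>\<omega>. s powi ZY \<omega> \<partial>M)" by (rule integral_complex_of_real)
    finally show ?thesis using Gy[OF s0] by simp
  qed
  have "complex_of_real (\<Sum>i<m. pi_M M X \<theta> c i * (\<Sum>j\<in>{i+1..m}. (1 - s powi (int i - int j)) * f_pmf M (X 0) (\<theta> 0) c (- int j)))
     = complex_of_real ((\<integral>\<omega>. s ^ N \<omega> \<partial>M) * (1 - (\<integral>\<omega>. s powi ZY \<omega> \<partial>M)))"
  proof -
    have A: "complex_of_real (\<Sum>i<m. pi_M M X \<theta> c i * (\<Sum>j\<in>{i+1..m}. (1 - s powi (int i - int j)) * f_pmf M (X 0) (\<theta> 0) c (- int j)))
      = (\<Sum>i<m. complex_of_real (pi_M M X \<theta> c i) *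
            (\<Sum>j\<in>{i+1..m}. (1 - complex_of_real s powi (int i - int j)) * complex_of_real (f_pmf M (X 0) (\<theta> 0) c (- int j))))"
      by (simp only: of_real_sum of_real_mult of_real_diff of_real_1 of_real_power_int)
    have B: "complex_of_real ((\<integral>\<omega>. s ^ N \<omega> \<partial>M) * (1 - (\<integral>\<omega>. s powi ZY \<omega> \<partial>M)))
      = complex_of_real (\<integral>\<omega>. s ^ N \<omega> \<partial>M) * (1 - complex_of_real (\<integral>\<omega>. s powi ZY \<omega> \<partial>M))"
      by (simp only: of_real_mult of_real_diff of_real_1)
    show ?thesis unfolding A B using part1[OF s0] unfolding e1 e2 .
  qed
  then show ?thesis by (simp only: of_real_eq_iff)
qed

end

context TS begin

lemma part2:
  "(\<Sum>i<m. pi_M M X \<theta> c i * (\<Sum>j\<in>{i+1..m}. (real j - real i) * f_pmf M (X 0) (\<theta> 0) c (- int j)))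
     = c * integral\<^sup>L M (\<theta> 0) - integral\<^sup>L M (X 0)"
proof -
  define sq where "sq n = 1 - inverse (real (Suc n)) / 2" for n
  have sq1: "1/2 \<le> sq n" "sq n < 1" "0 < sq n" "sq n \<le> 1" "sq n \<noteq> 1" for n
  proof -
    have "inverse (real (Suc n)) \<le> 1" "0 < inverse (real (Suc n))" by (auto simp: inverse_le_1_iff)
    then show "1/2 \<le> sq n" "sq n < 1" "0 < sq n" "sq n \<le> 1" "sq n \<noteq> 1" by (auto simp: sq_def)
  qed
  have sqlim: "sq \<longlonglongrightarrow> 1"
    unfolding sq_def[abs_def] using tendsto_diff[OF tendsto_const tendsto_divide[OF LIMSEQ_inverse_real_of_nat tendsto_const[of 2]]]
    by simp
  define f where "f j = f_pmf M (X 0) (\<theta> 0) c (- int j)" for j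
  define p where "p i = pi_M M X \<theta> c i" for i
  define Gr where "Gr n = (\<integral>\<omega>. sq n ^ N \<omega> \<partial>M)" for n
  define Q where "Q n = (\<integral>\<omega>. qf (sq n) (ZY \<omega>) \<partial>M)" for n
  define L where "L = (\<Sum>i<m. p i * (\<Sum>j\<in>{i+1..m}. real_of_int (int i - int j) * f j))"
  have intY: "integrable M (Yv 0)" unfolding Yv_def[abs_def] using intX int\<theta> by simp
  have intZY: "integrable M (\<lambda>\<omega>. real_of_int (ZY \<omega>))"
  proof -
    have "integrable M (\<lambda>\<omega>. real_of_int (ZY \<omega>)) \<longleftrightarrow> integrable M (Yv 0)"
      by (rule Bochner_Integration.integrable_cong) (auto simp: Y0_ZY)
    then show ?thesis using intY by simp
  qed
  have EZY: "(\<integral>\<omega>. real_of_int (ZY \<omega>) \<partial>M) = integral\<^sup>L M (X 0) - c * integral\<^sup>L M (\<theta> 0)"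
  proof -
    have "(\<integral>\<omega>. real_of_int (ZY \<omega>) \<partial>M) = integral\<^sup>L M (Yv 0)"
      by (rule Bochner_Integration.integral_cong) (auto simp: Y0_ZY)
    then show ?thesis by (simp add: int_Y0)
  qed
  have Gr_lim: "Gr \<longlonglongrightarrow> 1"
  proof -
    have "(\<lambda>n. \<integral>\<omega>. sq n ^ N \<omega> \<partial>M) \<longlonglongrightarrow> (\<integral>\<omega>. 1 \<partial>M)"
    proof (rule integral_dominated_convergence[where w="\<lambda>_. 1"])
      show "AE x in M. (\<lambda>i. sq i ^ N x) \<longlonglongrightarrow> 1"
        using tendsto_power[OF sqlim] by (auto intro!: AE_I2)
      show "AE x in M. norm (sq i ^ N x) \<le> 1" for i
        using sq1[of i] by (auto intro!: AE_I2 simp: power_le_one)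
    qed auto
    then show ?thesis by (simp add: Gr_def[abs_def] prob_space)
  qed
  have Q_lim: "Q \<longlonglongrightarrow> integral\<^sup>L M (X 0) - c * integral\<^sup>L M (\<theta> 0)"
  proof -
    have "(\<lambda>n. \<integral>\<omega>. qf (sq n) (ZY \<omega>) \<partial>M) \<longlonglongrightarrow> (\<integral>\<omega>. real_of_int (ZY \<omega>) \<partial>M)"
    proof (rule integral_dominated_convergence[where w="\<lambda>\<omega>. \<bar>real_of_int (ZY \<omega>)\<bar> + real m * 2 ^ m"])
      show "integrable M (\<lambda>\<omega>. \<bar>real_of_int (ZY \<omega>)\<bar> + real m * 2 ^ m)"
        using intZY by auto
      show "AE x in M. (\<lambda>i. qf (sq i) (ZY x)) \<longlonglongrightarrow> real_of_int (ZY x)"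
        by (intro AE_I2 qf_lim sqlim sq1)
      show "AE x in M. norm (qf (sq i) (ZY x)) \<le> \<bar>real_of_int (ZY x)\<bar> + real m * 2 ^ m" for i
        using AE_ZY_ge by (rule AE_mp) (auto intro!: AE_I2 qf_bound sq1)
    qed (auto simp: qf_def)
    then show ?thesis by (simp add: Q_def[abs_def] EZY)
  qed
  have eqn: "(\<Sum>i<m. p i * (\<Sum>j\<in>{i+1..m}. qf (sq n) (int i - int j) * f j)) = Gr n * Q n" for n
  proof -
    let ?s = "sq n"
    have s0: "?s \<noteq> 0" "1 - ?s \<noteq> 0" using sq1[of n] by auto
    have ip: "integrable M (\<lambda>\<omega>. ?s powi ZY \<omega>)"
    proof (rule Bochner_Integration.integrable_bound[where f="\<lambda>_. (1 / ?s) ^ m"])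
      show "AE x in M. norm (?s powi ZY x) \<le> norm ((1 / ?s) ^ m)"
        using AE_ZY_ge
      proof (rule AE_mp, intro AE_I2 impI)
        fix x assume "- int m \<le> ZY x"
        then have "?s powi ZY x \<le> (1 / ?s) ^ m" by (rule powi_bound[OF sq1(3) sq1(4)])
        moreover have "0 \<le> ?s powi ZY x" using sq1[of n] by simp
        ultimately show "norm (?s powi ZY x) \<le> norm ((1 / ?s) ^ m)" using sq1[of n] by simp
      qed
    qed auto
    have "Q n = (\<integral>\<omega>. (1 - ?s powi ZY \<omega>) / (1 - ?s) \<partial>M)" by (simp add: Q_def qf_def)
    also have "\<dots> = (\<integral>\<omega>. (1 - ?s powi ZY \<omega>) \<partial>M) / (1 - ?s)" by (rule integral_divide_zero)
    also have "(\<integral>\<omega>. (1 - ?s powi ZY \<omega>) \<partial>M) = 1 - (\<integral>\<omega>. ?s powi ZY \<omega> \<partial>M)"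
      using ip by (simp add: prob_space)
    finally have Qe: "Q n = (1 - (\<integral>\<omega>. ?s powi ZY \<omega> \<partial>M)) / (1 - ?s)" .
    have "(\<Sum>i<m. p i * (\<Sum>j\<in>{i+1..m}. qf ?s (int i - int j) * f j))
       = (\<Sum>i<m. p i * (\<Sum>j\<in>{i+1..m}. (1 - ?s powi (int i - int j)) * f j)) / (1 - ?s)"
      by (simp add: qf_def sum_divide_distrib sum_distrib_left)
    also have "\<dots> = Gr n * (1 - (\<integral>\<omega>. ?s powi ZY \<omega> \<partial>M)) / (1 - ?s)"
      using part1_real[OF sq1(3) sq1(4), of n] by (simp add: p_def f_def Gr_def)
    finally show ?thesis by (simp add: Qe)
  qed
  have "(\<lambda>n. \<Sum>i<m. p i * (\<Sum>j\<in>{i+1..m}. qf (sq n) (int i - int j) * f j)) \<longlonglongrightarrow> L"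
    unfolding L_def by (intro tendsto_intros qf_lim sqlim sq1)
  moreover have "(\<lambda>n. \<Sum>i<m. p i * (\<Sum>j\<in>{i+1..m}. qf (sq n) (int i - int j) * f j)) \<longlonglongrightarrow>
      1 * (integral\<^sup>L M (X 0) - c * integral\<^sup>L M (\<theta> 0))"
    unfolding eqn by (intro tendsto_mult Gr_lim Q_lim)
  ultimately have LL: "L = integral\<^sup>L M (X 0) - c * integral\<^sup>L M (\<theta> 0)"
    using LIMSEQ_unique by fastforce
  have "(\<Sum>i<m. p i * (\<Sum>j\<in>{i+1..m}. (real j - real i) * f j)) = - L"
  proof -
    have e: "(real j - real i) * f j = - (real_of_int (int i - int j) * f j)" for i j by (simp add: algebra_simps)
    show ?thesis by (simp only: e sum_negf mult_minus_right L_def)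
  qed
  then show ?thesis using LL by (simp add: p_def f_def)
qed

end

theorem theorem2p3:
  fixes M :: "'a measure" and X \<theta> :: "nat \<Rightarrow> 'a \<Rightarrow> real" and c :: real and m :: nat
  assumes "prob_space M"
    and "c > 0"
    and rvX: "\<And>i. X i \<in> borel_measurable M"
    and rv\<theta>: "\<And>i. \<theta> i \<in> borel_measurable M"
    and indep: "prob_space.indep_vars M (\<lambda>_. borel)
                  (\<lambda>k. case k of Inl i \<Rightarrow> X i | Inr i \<Rightarrow> \<theta> i) (UNIV :: (nat + nat) set)"
    and idX: "\<And>i. distr M borel (X i) = distr M borel (X 0)"
    and id\<theta>: "\<And>i. distr M borel (\<theta> i) = distr M borel (\<theta> 0)"
    and natX: "\<And>i \<omega>. \<omega> \<in> space M \<Longrightarrow> X i \<omega> \<in> \<nat>"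
    and nat\<theta>: "\<And>i \<omega>. \<omega> \<in> space M \<Longrightarrow> c * \<theta> i \<omega> \<in> \<nat>"
    and bound: "measure M {\<omega> \<in> space M. c * \<theta> 0 \<omega> \<le> real m} = 1"
    and intX: "integrable M (X 0)"
    and int\<theta>: "integrable M (\<theta> 0)"
    and npc: "c * integral\<^sup>L M (\<theta> 0) - integral\<^sup>L M (X 0) > 0"
  shows
    "(\<forall>s::complex. s \<noteq> 0 \<and> norm s \<le> 1 \<longrightarrow>
        (\<Sum>i<m. complex_of_real (pi_M M X \<theta> c i) *
            (\<Sum>j\<in>{i+1..m}. (1 - s powi (int i - int j)) * complex_of_real (f_pmf M (X 0) (\<theta> 0) c (- int j))))
        = pgf_M M X \<theta> c s * (1 - pgf_diff M (X 0) (\<lambda>\<omega>. c * \<theta> 0 \<omega>) s))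
     \<and> (\<Sum>i<m. pi_M M X \<theta> c i *
            (\<Sum>j\<in>{i+1..m}. (real j - real i) * f_pmf M (X 0) (\<theta> 0) c (- int j)))
        = c * integral\<^sup>L M (\<theta> 0) - integral\<^sup>L M (X 0)
     \<and> (\<forall>s::complex. norm s < 1 \<and> s ^ m * (1 - pgf_diff M (X 0) (\<lambda>\<omega>. c * \<theta> 0 \<omega>) s) \<noteq> 0 \<longrightarrow>
        Xi M X \<theta> c s =
          1 / (s ^ m * (pgf_diff M (X 0) (\<lambda>\<omega>. c * \<theta> 0 \<omega>) s - 1)) *
          (\<Sum>i<m. complex_of_real (pi_M M X \<theta> c i) *
            (\<Sum>j\<in>{0..m-i-1}. s ^ (j + i) * complex_of_real (F_cdf M (X 0) (\<theta> 0) c (- int m + int j)))))"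
proof -
  interpret TS M X \<theta> c m
    by (rule TS.intro[OF assms(1)], unfold_locales) (use assms in \<open>simp_all\<close>)
  show ?thesis
  proof (intro conjI allI impI)
    fix s :: complex assume "s \<noteq> 0 \<and> norm s \<le> 1"
    then show "(\<Sum>i<m. complex_of_real (pi_M M X \<theta> c i) *
            (\<Sum>j\<in>{i+1..m}. (1 - s powi (int i - int j)) * complex_of_real (f_pmf M (X 0) (\<theta> 0) c (- int j))))
        = pgf_M M X \<theta> c s * (1 - pgf_diff M (X 0) (\<lambda>\<omega>. c * \<theta> 0 \<omega>) s)"
      using part1 by blast
  next
    show "(\<Sum>i<m. pi_M M X \<theta> c i *
            (\<Sum>j\<in>{i+1..m}. (real j - real i) * f_pmf M (X 0) (\<theta> 0) c (- int j)))
        = c * integral\<^sup>L M (\<theta> 0) - integral\<^sup>L M (X 0)" by (rule part2)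
  next
    fix s :: complex assume "norm s < 1 \<and> s ^ m * (1 - pgf_diff M (X 0) (\<lambda>\<omega>. c * \<theta> 0 \<omega>) s) \<noteq> 0"
    then show "Xi M X \<theta> c s =
          1 / (s ^ m * (pgf_diff M (X 0) (\<lambda>\<omega>. c * \<theta> 0 \<omega>) s - 1)) *
          (\<Sum>i<m. complex_of_real (pi_M M X \<theta> c i) *
            (\<Sum>j\<in>{0..m-i-1}. s ^ (j + i) * complex_of_real (F_cdf M (X 0) (\<theta> 0) c (- int m + int j))))"
      using part3 by blast
  qed
qed

end
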